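(* Let $W\subseteq\mathbb P^{c-1}_k$ be a projective variety (a Zariski closed subset). Then there exists $C\in\mathsf{grK_{tac}}(R)$ with $V(C)=W$.
   Context: Standing setup: $Q$ is a regular local ring with maximal ideal $\mathfrak n$ and residue field $k$; $f_1,\dots,f_c\in\mathfrak n^2$ ($c\ge2$) is a $Q$-regular sequence; $P=Q[x_1,\dots,x_c]$ graded with $\deg x_i=1$, $Q$ in degree 0; $w=f_1x_1+\cdots+f_cx_c$, $R=P/(w)$. A complex of finitely generated free modules over a ring $A$ is totally acyclic if $H(C)=0=H(\operatorname{Hom}_A(C,A))$. $\mathsf{grK_{tac}}(R)$ is the category of totally acyclic complexes of finitely generated graded free $R$-modules with homogeneous differentials. A complex is contractible if its identity map is null-homotopic. For $\alpha=(\alpha_1:\dots:\alpha_c)\in\mathbb P^{c-1}_k$ with lifts $a_i\in Q$ of representative coordinates, $R_\alpha=R/(x_1-a_1,\dots,x_c-a_c)\cong Q/(a_1f_1+\cdots+a_cf_c)$, $C_\alpha=C\otimes_RR_\alpha$, and the rank variety is $V(C)=\{\alpha\in\mathbb P^{c-1}_k\mid C_\alpha\text{ not contractible}\}$. *)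

theory Defs
  imports Main "HOL-Library.Poly_Mapping"
begin

definition is_ideal :: "'a::comm_ring_1 set \<Rightarrow> bool" where
  "is_ideal I \<longleftrightarrow> 0 \<in> I \<and> (\<forall>x\<in>I. \<forall>y\<in>I. x + y \<in> I) \<and> (\<forall>r. \<forall>x\<in>I. r * x \<in> I)"

definition gen_ideal :: "'a::comm_ring_1 set \<Rightarrow> 'a set" where
  "gen_ideal S = {x. \<exists>F r. finite F \<and> F \<subseteq> S \<and> x = (\<Sum>g\<in>F. r g * g)}"

definition prime_ideal :: "'a::comm_ring_1 set \<Rightarrow> bool" where
  "prime_ideal P \<longleftrightarrow> is_ideal P \<and> P \<noteq> UNIV \<and> (\<forall>x y. x * y \<in> P \<longrightarrow> x \<in> P \<or> y \<in> P)"

definition noetherian_ring :: "'a::comm_ring_1 itself \<Rightarrow> bool" where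
  "noetherian_ring _ \<longleftrightarrow> (\<forall>I::'a set. is_ideal I \<longrightarrow> (\<exists>F. finite F \<and> I = gen_ideal F))"

definition local_ring_with :: "'a::comm_ring_1 set \<Rightarrow> bool" where
  "local_ring_with m \<longleftrightarrow> is_ideal m \<and> m \<noteq> UNIV \<and>
     (\<forall>I::'a set. is_ideal I \<and> I \<noteq> UNIV \<longrightarrow> I \<subseteq> m)"

definition has_prime_chain :: "'a::comm_ring_1 itself \<Rightarrow> nat \<Rightarrow> bool" where
  "has_prime_chain _ n \<longleftrightarrow> (\<exists>P::nat \<Rightarrow> 'a set.
      (\<forall>i\<le>n. prime_ideal (P i)) \<and> (\<forall>i<n. P i \<subset> P (Suc i)))"

definition krull_dim_eq :: "'a::comm_ring_1 itself \<Rightarrow> nat \<Rightarrow> bool" where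
  "krull_dim_eq T d \<longleftrightarrow> has_prime_chain T d \<and> (\<forall>e. has_prime_chain T e \<longrightarrow> e \<le> d)"

definition regular_local_ring :: "'a::comm_ring_1 set \<Rightarrow> bool" where
  "regular_local_ring m \<longleftrightarrow> noetherian_ring TYPE('a) \<and> local_ring_with m \<and>
     (\<exists>d. krull_dim_eq TYPE('a) d \<and> (\<exists>xs. length xs = d \<and> m = gen_ideal (set xs)))"

definition ideal_sq :: "'a::comm_ring_1 set \<Rightarrow> 'a set" where
  "ideal_sq m = gen_ideal {a * b | a b. a \<in> m \<and> b \<in> m}"

definition regular_sequence :: "nat \<Rightarrow> (nat \<Rightarrow> 'a::comm_ring_1) \<Rightarrow> bool" where
  "regular_sequence c f \<longleftrightarrow>
     (\<forall>i<c. \<forall>r. r * f i \<in> gen_ideal (f ` {..<i}) \<longrightarrow> r \<in> gen_ideal (f ` {..<i})) \<and>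
     gen_ideal (f ` {..<c}) \<noteq> UNIV"

type_synonym 'a mpoly = "(nat \<Rightarrow>\<^sub>0 nat) \<Rightarrow>\<^sub>0 'a"

definition Var :: "nat \<Rightarrow> 'a::comm_ring_1 mpoly" where
  "Var i = Poly_Mapping.single (Poly_Mapping.single i 1) 1"

definition Const :: "'a::comm_ring_1 \<Rightarrow> 'a mpoly" where
  "Const a = Poly_Mapping.single 0 a"

definition in_P :: "nat \<Rightarrow> 'a::comm_ring_1 mpoly \<Rightarrow> bool" where
  "in_P c p \<longleftrightarrow> (\<forall>mo\<in>Poly_Mapping.keys p. Poly_Mapping.keys mo \<subseteq> {..<c})"

definition mono_deg :: "(nat \<Rightarrow>\<^sub>0 nat) \<Rightarrow> nat" where
  "mono_deg mo = (\<Sum>i\<in>Poly_Mapping.keys mo. Poly_Mapping.lookup mo i)"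

text \<open>p is homogeneous of (integer) degree e (deg x_i = 1, Q in degree 0);
  0 is homogeneous of every degree, and only 0 has negative degree.\<close>
definition homogeneous :: "'a::comm_ring_1 mpoly \<Rightarrow> int \<Rightarrow> bool" where
  "homogeneous p e \<longleftrightarrow> (\<forall>mo\<in>Poly_Mapping.keys p. int (mono_deg mo) = e)"

definition eval_mpoly :: "'a::comm_ring_1 mpoly \<Rightarrow> (nat \<Rightarrow> 'a) \<Rightarrow> 'a" where
  "eval_mpoly p a = (\<Sum>mo\<in>Poly_Mapping.keys p.
      Poly_Mapping.lookup p mo * (\<Prod>i\<in>Poly_Mapping.keys mo. a i ^ Poly_Mapping.lookup mo i))"

definition wpot :: "nat \<Rightarrow> (nat \<Rightarrow> 'a::comm_ring_1) \<Rightarrow> 'a mpoly" where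
  "wpot c f = (\<Sum>i<c. Const (f i) * Var i)"

text \<open>A complex of f.g. graded free modules over R = P/(w) is encoded by
  ranks r n of C_n, internal degrees dg n j of the basis elements
  (C_n = direct sum of R(-dg n j), j < r n), and matrices d n : C_n \<rightarrow> C_(n-1)
  whose entries (i,j), i < r(n-1), j < r n, are lifts to P of elements of R.
  Everything is read modulo the ideal (w).\<close>
type_synonym 'a gcomplex =
  "(int \<Rightarrow> nat) \<times> (int \<Rightarrow> nat \<Rightarrow> int) \<times> (int \<Rightarrow> nat \<Rightarrow> nat \<Rightarrow> 'a mpoly)"

definition rk :: "'a gcomplex \<Rightarrow> int \<Rightarrow> nat" where "rk C = fst C"
definition dg :: "'a gcomplex \<Rightarrow> int \<Rightarrow> nat \<Rightarrow> int" where "dg C = fst (snd C)"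
definition dmat :: "'a gcomplex \<Rightarrow> int \<Rightarrow> nat \<Rightarrow> nat \<Rightarrow> 'a mpoly" where "dmat C = snd (snd C)"

definition cong_mod :: "'a::comm_ring_1 set \<Rightarrow> 'a \<Rightarrow> 'a \<Rightarrow> bool" where
  "cong_mod I x y \<longleftrightarrow> x - y \<in> I"

definition is_graded_complex :: "nat \<Rightarrow> (nat \<Rightarrow> 'a::comm_ring_1) \<Rightarrow> 'a gcomplex \<Rightarrow> bool" where
  "is_graded_complex c f C \<longleftrightarrow>
     (\<forall>n i j. in_P c (dmat C n i j)) \<and>
     (\<forall>n i j. (i \<ge> rk C (n - 1) \<or> j \<ge> rk C n) \<longrightarrow> dmat C n i j = 0) \<and>
     \<comment> \<open>homogeneous differentials (degree 0 maps)\<close>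
     (\<forall>n i j. i < rk C (n - 1) \<and> j < rk C n \<longrightarrow>
         homogeneous (dmat C n i j) (dg C n j - dg C (n - 1) i)) \<and>
     \<comment> \<open>d_(n-1) d_n = 0 over R\<close>
     (\<forall>n i k. i < rk C (n - 2) \<and> k < rk C n \<longrightarrow>
         cong_mod (gen_ideal {wpot c f})
           (\<Sum>j<rk C (n - 1). dmat C (n - 1) i j * dmat C n j k) 0)"

text \<open>H(C) = 0 over R (ungraded homology; vectors of lifts to P).\<close>
definition acyclic_R :: "nat \<Rightarrow> (nat \<Rightarrow> 'a::comm_ring_1) \<Rightarrow> 'a gcomplex \<Rightarrow> bool" where
  "acyclic_R c f C \<longleftrightarrow> (\<forall>n (v::nat \<Rightarrow> 'a mpoly).
     (\<forall>j. in_P c (v j)) \<and>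
     (\<forall>i<rk C (n - 1). cong_mod (gen_ideal {wpot c f}) (\<Sum>j<rk C n. dmat C n i j * v j) 0) \<longrightarrow>
     (\<exists>u::nat \<Rightarrow> 'a mpoly. (\<forall>k. in_P c (u k)) \<and>
        (\<forall>j<rk C n. cong_mod (gen_ideal {wpot c f}) (v j) (\<Sum>k<rk C (n + 1). dmat C (n + 1) j k * u k))))"

text \<open>H(Hom_R(C,R)) = 0: the dual complex has maps d_n^T : C_(n-1)^* \<rightarrow> C_n^*.\<close>
definition coacyclic_R :: "nat \<Rightarrow> (nat \<Rightarrow> 'a::comm_ring_1) \<Rightarrow> 'a gcomplex \<Rightarrow> bool" where
  "coacyclic_R c f C \<longleftrightarrow> (\<forall>n (v::nat \<Rightarrow> 'a mpoly).
     (\<forall>j. in_P c (v j)) \<and>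
     (\<forall>k<rk C (n + 1). cong_mod (gen_ideal {wpot c f}) (\<Sum>j<rk C n. dmat C (n + 1) j k * v j) 0) \<longrightarrow>
     (\<exists>u::nat \<Rightarrow> 'a mpoly. (\<forall>i. in_P c (u i)) \<and>
        (\<forall>j<rk C n. cong_mod (gen_ideal {wpot c f}) (v j) (\<Sum>i<rk C (n - 1). dmat C n i j * u i))))"

definition grKtac :: "nat \<Rightarrow> (nat \<Rightarrow> 'a::comm_ring_1) \<Rightarrow> 'a gcomplex \<Rightarrow> bool" where
  "grKtac c f C \<longleftrightarrow> is_graded_complex c f C \<and> acyclic_R c f C \<and> coacyclic_R c f C"

text \<open>The ideal of P defining R_alpha = R/(x_1 - a_1, ..., x_c - a_c) = P/(w, x_i - a_i).\<close>
definition J_alpha :: "nat \<Rightarrow> (nat \<Rightarrow> 'a::comm_ring_1) \<Rightarrow> (nat \<Rightarrow> 'a) \<Rightarrow> 'a mpoly set" where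
  "J_alpha c f a = gen_ideal (insert (wpot c f) {Var i - Const (a i) | i. i < c})"

text \<open>C_alpha = C \<otimes>_R R_alpha is contractible: there are maps s_n : C_n \<rightarrow> C_(n+1)
  over R_alpha with d_(n+1) s_n + s_(n-1) d_n = id.\<close>
definition contractible_at :: "nat \<Rightarrow> (nat \<Rightarrow> 'a::comm_ring_1) \<Rightarrow> 'a gcomplex \<Rightarrow> (nat \<Rightarrow> 'a) \<Rightarrow> bool" where
  "contractible_at c f C a \<longleftrightarrow> (\<exists>s::int \<Rightarrow> nat \<Rightarrow> nat \<Rightarrow> 'a mpoly.
     (\<forall>n i j. in_P c (s n i j)) \<and>
     (\<forall>n i j. i < rk C n \<and> j < rk C n \<longrightarrow>
        cong_mod (J_alpha c f a)
          ((\<Sum>k<rk C (n + 1). dmat C (n + 1) i k * s n k j) +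
           (\<Sum>k<rk C (n - 1). s (n - 1) i k * dmat C n k j))
          (if i = j then 1 else 0)))"

text \<open>a lifts the coordinates of a point of P^(c-1)_k (some coordinate nonzero in k).\<close>
definition proj_point_lift :: "nat \<Rightarrow> 'a::comm_ring_1 set \<Rightarrow> (nat \<Rightarrow> 'a) \<Rightarrow> bool" where
  "proj_point_lift c m a \<longleftrightarrow> (\<exists>i<c. a i \<notin> m)"

text \<open>Zariski closed subset of P^(c-1)_k, given as the common zero locus of a set S of
  homogeneous polynomials (lifted to Q[x_0..x_(c-1)]): a point with lift a lies in it iff
  every F in S vanishes at a modulo m.\<close>
definition homog_poly_set :: "nat \<Rightarrow> 'a::comm_ring_1 mpoly set \<Rightarrow> bool" where
  "homog_poly_set c S \<longleftrightarrow> (\<forall>F\<in>S. in_P c F \<and> (\<exists>e. homogeneous F e))"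

definition zero_locus :: "'a::comm_ring_1 set \<Rightarrow> 'a mpoly set \<Rightarrow> (nat \<Rightarrow> 'a) \<Rightarrow> bool" where
  "zero_locus m S a \<longleftrightarrow> (\<forall>F\<in>S. eval_mpoly F a \<in> m)"

end

theory Submission
  imports Defs
begin
abbreviation lkp where "lkp \<equiv> Poly_Mapping.lookup"
abbreviation sng where "sng \<equiv> Poly_Mapping.single"

lemma mono_split:
  fixes a T :: "nat \<Rightarrow>\<^sub>0 nat"
  assumes "\<forall>i. lkp a i \<le> lkp T i"
  shows "T = a + (T - a)"
  by (rule poly_mapping_eqI) (use assms in \<open>simp add: lookup_add lookup_minus\<close>)

lemma mono_split_iff:
  fixes a T :: "nat \<Rightarrow>\<^sub>0 nat"
  shows "(\<exists>t. T = a + t) \<longleftrightarrow> (\<forall>i. lkp a i \<le> lkp T i)"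
  using mono_split by (auto simp: lookup_add)

lemma lookup_single_mult:
  fixes p :: "'a::comm_ring_1 mpoly"
  shows "lkp (sng a x * p) T = (if (\<forall>i. lkp a i \<le> lkp T i) then x * lkp p (T - a) else 0)"
proof -
  have "lkp (sng a x * p) T = (\<Sum>l. (x when a = l) * (\<Sum>q. lkp p q when T = l + q))"
    by (simp add: lookup_mult lookup_single)
  also have "\<dots> = (\<Sum>l. (x * (\<Sum>q. lkp p q when T = l + q)) when a = l)"
    by (simp add: when_mult)
  also have "\<dots> = x * (\<Sum>q. lkp p q when T = a + q)"
    by simp
  also have "\<dots> = (if (\<forall>i. lkp a i \<le> lkp T i) then x * lkp p (T - a) else 0)"
  proof (cases "\<forall>i. lkp a i \<le> lkp T i")
    case True
    have "\<And>q. (T = a + q) = (q = T - a)"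
      using mono_split[OF True] by (auto simp: add_diff_cancel_left')
    then show ?thesis using True by simp
  next
    case False
    then have "\<And>q. T \<noteq> a + q" using mono_split_iff by blast
    then show ?thesis using False by auto
  qed
  finally show ?thesis .
qed

lemma poly_repr:
  fixes p :: "('b \<Rightarrow>\<^sub>0 'c::comm_monoid_add)"
  shows "p = (\<Sum>mo\<in>Poly_Mapping.keys p. sng mo (lkp p mo))"
proof (rule poly_mapping_eqI)
  fix k
  show "lkp p k = lkp (\<Sum>mo\<in>Poly_Mapping.keys p. sng mo (lkp p mo)) k"
    by (auto simp: lookup_sum lookup_single when_def in_keys_iff)
qed

lemma ideal_diff: "is_ideal I \<Longrightarrow> x \<in> I \<Longrightarrow> y \<in> I \<Longrightarrow> x - y \<in> I"
  unfolding is_ideal_def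
  by (metis diff_conv_add_uminus mult_minus1)

lemma ideal_uminus: "is_ideal I \<Longrightarrow> x \<in> I \<Longrightarrow> - x \<in> I"
  unfolding is_ideal_def by (metis mult_minus1)

lemma ideal_add: "is_ideal I \<Longrightarrow> x \<in> I \<Longrightarrow> y \<in> I \<Longrightarrow> x + y \<in> I"
  unfolding is_ideal_def by blast

lemma ideal_zero: "is_ideal I \<Longrightarrow> 0 \<in> I"
  unfolding is_ideal_def by blast

lemma ideal_multl: "is_ideal I \<Longrightarrow> x \<in> I \<Longrightarrow> r * x \<in> I"
  unfolding is_ideal_def by blast

lemma ideal_multr: "is_ideal I \<Longrightarrow> x \<in> I \<Longrightarrow> x * r \<in> I"
  unfolding is_ideal_def by (metis mult.commute)

lemma ideal_sum: "is_ideal I \<Longrightarrow> (\<And>x. x \<in> A \<Longrightarrow> g x \<in> I) \<Longrightarrow> sum g A \<in> I"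
  by (induction A rule: infinite_finite_induct) (auto simp: ideal_zero ideal_add)

lemma gi_gen: "s \<in> S \<Longrightarrow> s \<in> gen_ideal S"
  unfolding gen_ideal_def
  by (rule CollectI, rule exI[of _ "{s}"], rule exI[of _ "\<lambda>_. 1"]) simp

lemma gi_least: "is_ideal I \<Longrightarrow> S \<subseteq> I \<Longrightarrow> gen_ideal S \<subseteq> I"
  unfolding gen_ideal_def
  by (auto intro!: ideal_sum ideal_multl)

lemma gi_ideal: "is_ideal (gen_ideal S)"
  unfolding is_ideal_def
proof (intro conjI ballI allI)
  show "0 \<in> gen_ideal S" unfolding gen_ideal_def
    by (rule CollectI, rule exI[of _ "{}"]) simp
next
  fix x y assume "x \<in> gen_ideal S" "y \<in> gen_ideal S"
  then obtain F1 r1 F2 r2 where f: "finite F1" "F1 \<subseteq> S" "x = (\<Sum>g\<in>F1. r1 g * g)"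
     "finite F2" "F2 \<subseteq> S" "y = (\<Sum>g\<in>F2. r2 g * g)"
    unfolding gen_ideal_def by blast
  define r where "r g = (if g \<in> F1 then r1 g else 0) + (if g \<in> F2 then r2 g else 0)" for g
  have "(\<Sum>g\<in>F1 \<union> F2. r g * g) = (\<Sum>g\<in>F1 \<union> F2. (if g \<in> F1 then r1 g * g else 0)) +
       (\<Sum>g\<in>F1 \<union> F2. (if g \<in> F2 then r2 g * g else 0))"
    unfolding sum.distrib[symmetric] by (rule sum.cong) (auto simp: r_def distrib_right)
  also have "\<dots> = x + y"
    using f by (simp add: sum.If_cases Int_absorb1)
  finally show "x + y \<in> gen_ideal S" unfolding gen_ideal_def using f
    by (intro CollectI exI[of _ "F1 \<union> F2"] exI[of _ r]) auto
next
  fix x s assume "x \<in> gen_ideal S"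
  then obtain F r where f: "finite F" "F \<subseteq> S" "x = (\<Sum>g\<in>F. r g * g)"
    unfolding gen_ideal_def by blast
  then have "s * x = (\<Sum>g\<in>F. (s * r g) * g)" by (simp add: sum_distrib_left mult.assoc)
  then show "s * x \<in> gen_ideal S" unfolding gen_ideal_def
    by (intro CollectI exI[of _ F] exI[of _ "\<lambda>g. s * r g"]) (use f in auto)
qed

lemma gi_mono: "A \<subseteq> gen_ideal B \<Longrightarrow> gen_ideal A \<subseteq> gen_ideal B"
  by (rule gi_least[OF gi_ideal])

lemma gi_subset: "A \<subseteq> B \<Longrightarrow> gen_ideal A \<subseteq> gen_ideal B"
  using gi_gen gi_mono by blast

lemma gi_finite: "x \<in> gen_ideal S \<Longrightarrow> \<exists>F. finite F \<and> F \<subseteq> S \<and> x \<in> gen_ideal F"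
  unfolding gen_ideal_def by blast

lemma gi_empty: "gen_ideal {} = {0}"
  unfolding gen_ideal_def by auto

lemma gi_single: "gen_ideal {w} = {r * w | r. True}"
proof
  have "is_ideal {r * w | r. True}"
    unfolding is_ideal_def
  proof (intro conjI ballI allI)
    show "0 \<in> {r * w | r. True}" unfolding mem_Collect_eq by (intro exI[of _ 0]) simp
  next
    fix x y assume "x \<in> {r * w | r. True}" "y \<in> {r * w | r. True}"
    then obtain r1 r2 where "x = r1 * w" "y = r2 * w" by blast
    then show "x + y \<in> {r * w | r. True}"
      unfolding mem_Collect_eq by (intro exI[of _ "r1 + r2"]) (simp add: distrib_right)
  next
    fix x s assume "x \<in> {r * w | r. True}"
    then obtain r1 where "x = r1 * w" by blast
    then show "s * x \<in> {r * w | r. True}"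
      unfolding mem_Collect_eq by (intro exI[of _ "s * r1"]) (simp add: mult.assoc)
  qed
  moreover have "{w} \<subseteq> {r * w | r. True}" unfolding mem_Collect_eq by (auto intro: exI[of _ 1])
  ultimately show "gen_ideal {w} \<subseteq> {r * w | r. True}" by (rule gi_least)
  show "{r * w | r. True} \<subseteq> gen_ideal {w}"
    using gi_ideal[of "{w}"] gi_gen[of w "{w}"] ideal_multl by blast
qed

lemma gi_image_sum:
  assumes "finite A"
  shows "gen_ideal (f ` A) \<subseteq> {\<Sum>k\<in>A. r k * f k | r. True}"
proof (rule gi_least)
  show "is_ideal {\<Sum>k\<in>A. r k * f k | r. True}"
    unfolding is_ideal_def
  proof (intro conjI ballI allI)
    show "0 \<in> {\<Sum>k\<in>A. r k * f k | r. True}" by (auto intro!: exI[of _ "\<lambda>_. 0"])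
  next
    fix x y assume "x \<in> {\<Sum>k\<in>A. r k * f k | r. True}" "y \<in> {\<Sum>k\<in>A. r k * f k | r. True}"
    then obtain r1 r2 where "x = (\<Sum>k\<in>A. r1 k * f k)" "y = (\<Sum>k\<in>A. r2 k * f k)" by blast
    then have "x + y = (\<Sum>k\<in>A. (r1 k + r2 k) * f k)" by (simp add: distrib_right sum.distrib)
    then show "x + y \<in> {\<Sum>k\<in>A. r k * f k | r. True}"
      unfolding mem_Collect_eq by (intro exI[of _ "\<lambda>k. r1 k + r2 k"]) simp
  next
    fix x s assume "x \<in> {\<Sum>k\<in>A. r k * f k | r. True}"
    then obtain r1 where "x = (\<Sum>k\<in>A. r1 k * f k)" by blast
    then have "s * x = (\<Sum>k\<in>A. (s * r1 k) * f k)" by (simp add: sum_distrib_left mult.assoc)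
    then show "s * x \<in> {\<Sum>k\<in>A. r k * f k | r. True}"
      unfolding mem_Collect_eq by (intro exI[of _ "\<lambda>k. s * r1 k"]) simp
  qed
  show "f ` A \<subseteq> {\<Sum>k\<in>A. r k * f k | r. True}"
  proof
    fix x assume "x \<in> f ` A"
    then obtain k0 where k0: "k0 \<in> A" "x = f k0" by blast
    have "(\<Sum>k\<in>A. (if k = k0 then 1 else 0) * f k) = f k0"
    proof -
      have "(\<Sum>k\<in>A. (if k = k0 then 1 else 0) * f k) = (\<Sum>k\<in>A. if k = k0 then f k else 0)"
        by (rule sum.cong) auto
      then show ?thesis using assms k0 by (simp add: sum.delta)
    qed
    then show "x \<in> {\<Sum>k\<in>A. r k * f k | r. True}" using k0 by (auto intro!: exI[of _ "\<lambda>k. if k = k0 then 1 else 0"])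
  qed
qed

lemma Const_add: "Const (a + b) = Const a + Const b" by (simp add: Const_def single_add)
lemma Const_mult: "Const (a * b) = Const a * Const b" by (simp add: Const_def mult_single)
lemma Const_one: "Const 1 = 1" by (simp add: Const_def)
lemma Const_zero: "Const 0 = 0" by (simp add: Const_def)
lemma Const_uminus: "Const (- a) = - Const a" by (simp add: Const_def single_uminus)
lemma Const_diff: "Const (a - b) = Const a - Const b" by (simp add: Const_def single_diff)
lemma Const_sum: "Const (sum g A) = (\<Sum>x\<in>A. Const (g x))"
  by (induction A rule: infinite_finite_induct) (auto simp: Const_zero Const_add)
lemma Const_prod: "Const (prod g A) = (\<Prod>x\<in>A. Const (g x))"
  by (induction A rule: infinite_finite_induct) (auto simp: Const_one Const_mult)
lemma Const_power: "Const (a ^ k) = Const a ^ k"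
  by (induction k) (auto simp: Const_one Const_mult)

lemma Const_single: "Const x * sng mo y = sng mo (x * y)"
  by (simp add: Const_def mult_single)

lemma Var_power: "(Var i :: 'a::comm_ring_1 mpoly) ^ k = sng (sng i k) 1"
  by (induction k) (auto simp: Var_def mult_single single_add[symmetric] add.commute)

lemma single_prod:
  "(\<Prod>i\<in>A. sng (g i) (1::'a::comm_ring_1)) = sng (\<Sum>i\<in>A. g i) 1"
  by (induction A rule: infinite_finite_induct) (auto simp: mult_single)

lemma mono_repr:
  fixes mo :: "nat \<Rightarrow>\<^sub>0 nat"
  shows "(\<Sum>i\<in>Poly_Mapping.keys mo. sng i (lkp mo i)) = mo"
  using poly_repr[of mo] by simp

lemma single_as_vars:
  fixes x :: "'a::comm_ring_1"
  shows "sng mo x = Const x * (\<Prod>i\<in>Poly_Mapping.keys mo. Var i ^ lkp mo i)"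
  by (simp add: Var_power single_prod mono_repr Const_single)

definition mon :: "(nat \<Rightarrow> 'a::comm_ring_1) \<Rightarrow> (nat \<Rightarrow>\<^sub>0 nat) \<Rightarrow> 'a" where
  "mon a mo = (\<Prod>i\<in>Poly_Mapping.keys mo. a i ^ lkp mo i)"

lemma eval_def2: "eval_mpoly p a = (\<Sum>mo\<in>Poly_Mapping.keys p. lkp p mo * mon a mo)"
  by (simp add: eval_mpoly_def mon_def)

lemma mon_superset:
  assumes "finite K" "Poly_Mapping.keys mo \<subseteq> K"
  shows "mon a mo = (\<Prod>i\<in>K. a i ^ lkp mo i)"
  unfolding mon_def
  by (rule prod.mono_neutral_left) (use assms in \<open>auto simp: in_keys_iff\<close>)

lemma mon_add: "mon a (mo1 + mo2) = mon a mo1 * mon a mo2"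
proof -
  let ?K = "Poly_Mapping.keys mo1 \<union> Poly_Mapping.keys mo2"
  have "mon a (mo1 + mo2) = (\<Prod>i\<in>?K. a i ^ lkp (mo1 + mo2) i)"
    by (rule mon_superset) (auto simp: keys_add intro: subset_trans[OF keys_add])
  also have "\<dots> = (\<Prod>i\<in>?K. a i ^ lkp mo1 i) * (\<Prod>i\<in>?K. a i ^ lkp mo2 i)"
    by (simp add: lookup_add power_add prod.distrib)
  also have "\<dots> = mon a mo1 * mon a mo2"
    using mon_superset[of ?K mo1 a] mon_superset[of ?K mo2 a] by simp
  finally show ?thesis .
qed

lemma mon_zero: "mon a 0 = 1" by (simp add: mon_def)

lemma eval_superset:
  assumes "finite K" "Poly_Mapping.keys p \<subseteq> K"
  shows "eval_mpoly p a = (\<Sum>mo\<in>K. lkp p mo * mon a mo)"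
  unfolding eval_def2
  by (rule sum.mono_neutral_left) (use assms in \<open>auto simp: in_keys_iff\<close>)

lemma eval_add: "eval_mpoly (p + q) a = eval_mpoly p a + eval_mpoly q a"
proof -
  let ?K = "Poly_Mapping.keys p \<union> Poly_Mapping.keys q"
  have "eval_mpoly (p + q) a = (\<Sum>mo\<in>?K. lkp (p + q) mo * mon a mo)"
    by (rule eval_superset) (use keys_add[of p q] in auto)
  also have "\<dots> = (\<Sum>mo\<in>?K. lkp p mo * mon a mo) + (\<Sum>mo\<in>?K. lkp q mo * mon a mo)"
    by (simp add: lookup_add distrib_right sum.distrib)
  also have "\<dots> = eval_mpoly p a + eval_mpoly q a"
    using eval_superset[of ?K p a] eval_superset[of ?K q a] by simp
  finally show ?thesis .
qed

lemma eval_zero: "eval_mpoly 0 a = 0" by (simp add: eval_def2)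

lemma eval_uminus: "eval_mpoly (- p) a = - eval_mpoly p a"
  by (simp add: eval_def2 keys_minus sum_negf)

lemma eval_diff: "eval_mpoly (p - q) a = eval_mpoly p a - eval_mpoly q a"
  using eval_add[of p "-q" a] by (simp add: eval_uminus)

lemma eval_sum: "eval_mpoly (sum g A) a = (\<Sum>x\<in>A. eval_mpoly (g x) a)"
  by (induction A rule: infinite_finite_induct) (auto simp: eval_zero eval_add)

lemma eval_single: "eval_mpoly (sng mo x) a = x * mon a mo"
  by (cases "x = 0") (auto simp: eval_def2)

lemma keys_single_mult:
  fixes p :: "'a::comm_ring_1 mpoly"
  shows "Poly_Mapping.keys (sng b x * p) \<subseteq> (\<lambda>t. b + t) ` Poly_Mapping.keys p"
proof
  fix T assume "T \<in> Poly_Mapping.keys (sng b x * p)"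
  then have "lkp (sng b x * p) T \<noteq> 0" by (simp add: in_keys_iff)
  then have h: "\<forall>i. lkp b i \<le> lkp T i" "lkp p (T - b) \<noteq> 0"
    by (auto simp: lookup_single_mult split: if_splits)
  then show "T \<in> (\<lambda>t. b + t) ` Poly_Mapping.keys p"
    using mono_split[OF h(1)] by (auto simp: in_keys_iff)
qed

lemma eval_single_mult:
  "eval_mpoly (sng b x * p) a = x * mon a b * eval_mpoly p a"
proof -
  have "eval_mpoly (sng b x * p) a =
        (\<Sum>T\<in>(\<lambda>t. b + t) ` Poly_Mapping.keys p. lkp (sng b x * p) T * mon a T)"
    by (rule eval_superset) (auto simp: keys_single_mult)
  also have "\<dots> = (\<Sum>t\<in>Poly_Mapping.keys p. lkp (sng b x * p) (b + t) * mon a (b + t))"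
    by (rule sum.reindex[unfolded comp_def]) (auto simp: inj_on_def)
  also have "\<dots> = (\<Sum>t\<in>Poly_Mapping.keys p. x * mon a b * (lkp p t * mon a t))"
    by (rule sum.cong) (auto simp: lookup_single_mult lookup_add mon_add)
  also have "\<dots> = x * mon a b * eval_mpoly p a"
    by (simp add: eval_def2 sum_distrib_left)
  finally show ?thesis .
qed

lemma eval_mult: "eval_mpoly (p * q) a = eval_mpoly p a * eval_mpoly q a"
proof -
  have "p * q = (\<Sum>mo\<in>Poly_Mapping.keys p. sng mo (lkp p mo) * q)"
    by (subst poly_repr[of p]) (simp add: sum_distrib_right)
  then have "eval_mpoly (p * q) a = (\<Sum>mo\<in>Poly_Mapping.keys p. lkp p mo * mon a mo * eval_mpoly q a)"
    by (simp add: eval_sum eval_single_mult)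
  also have "\<dots> = eval_mpoly p a * eval_mpoly q a"
    by (simp add: eval_def2 sum_distrib_right)
  finally show ?thesis .
qed

lemma eval_Const: "eval_mpoly (Const x) a = x"
  by (simp add: Const_def eval_single mon_zero)

lemma eval_one: "eval_mpoly 1 a = 1"
  using eval_Const[of 1 a] by (simp add: Const_one)

lemma eval_Var: "eval_mpoly (Var i) a = a i"
  by (simp add: Var_def eval_single mon_def)

lemma eval_wpot: "eval_mpoly (wpot c f) a = (\<Sum>i<c. f i * a i)"
  by (simp add: wpot_def eval_sum eval_mult eval_Const eval_Var)

lemma eval_gi:
  assumes "is_ideal m" "\<forall>g\<in>G. eval_mpoly g a \<in> m" "p \<in> gen_ideal G"
  shows "eval_mpoly p a \<in> m"
proof -
  obtain F r where "finite F" "F \<subseteq> G" "p = (\<Sum>g\<in>F. r g * g)"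
    using assms(3) unfolding gen_ideal_def by blast
  then show ?thesis using assms
    by (auto simp: eval_sum eval_mult intro!: ideal_sum ideal_multl)
qed

definition kb :: "nat \<Rightarrow> (nat \<Rightarrow>\<^sub>0 nat) \<Rightarrow> bool" where
  "kb n mo \<longleftrightarrow> Poly_Mapping.keys mo \<subseteq> {..<n}"

lemma kb_iff: "kb n mo \<longleftrightarrow> (\<forall>i. n \<le> i \<longrightarrow> lkp mo i = 0)"
  unfolding kb_def subset_iff in_keys_iff by (metis lessThan_iff not_le)

definition trunc :: "nat \<Rightarrow> 'a::comm_ring_1 mpoly \<Rightarrow> 'a mpoly" where
  "trunc n p = Abs_poly_mapping (\<lambda>mo. if kb n mo then lkp p mo else 0)"

lemma lookup_trunc: "lkp (trunc n p) mo = (if kb n mo then lkp p mo else 0)"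
proof -
  have "finite {mo. (if kb n mo then lkp p mo else 0) \<noteq> 0}"
    by (rule finite_subset[OF _ finite_lookup[of p]]) auto
  then show ?thesis unfolding trunc_def by simp
qed

lemma trunc_add: "trunc n (p + q) = trunc n p + trunc n q"
  by (rule poly_mapping_eqI) (simp add: lookup_trunc lookup_add)
lemma trunc_uminus: "trunc n (- p) = - trunc n p"
  by (rule poly_mapping_eqI) (simp add: lookup_trunc)
lemma trunc_diff: "trunc n (p - q) = trunc n p - trunc n q"
  by (rule poly_mapping_eqI) (simp add: lookup_trunc lookup_minus)
lemma trunc_zero: "trunc n 0 = 0"
  by (rule poly_mapping_eqI) (simp add: lookup_trunc)
lemma trunc_sum: "trunc n (sum g A) = (\<Sum>x\<in>A. trunc n (g x))"
  by (induction A rule: infinite_finite_induct) (auto simp: trunc_zero trunc_add)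

lemma in_P_kb: "in_P n p \<longleftrightarrow> (\<forall>mo\<in>Poly_Mapping.keys p. kb n mo)"
  unfolding in_P_def kb_def by simp

lemma in_P_trunc: "in_P n p \<longleftrightarrow> trunc n p = p"
proof
  assume "in_P n p" then show "trunc n p = p"
    by (intro poly_mapping_eqI) (auto simp: lookup_trunc in_P_kb in_keys_iff)
next
  assume h: "trunc n p = p"
  show "in_P n p" unfolding in_P_kb
  proof
    fix mo assume "mo \<in> Poly_Mapping.keys p"
    then have "lkp (trunc n p) mo \<noteq> 0" using h by (simp add: in_keys_iff)
    then show "kb n mo" by (simp add: lookup_trunc split: if_splits)
  qed
qed

lemma trunc_in_P: "in_P n (trunc n p)"
  unfolding in_P_kb by (auto simp: in_keys_iff lookup_trunc split: if_splits)

lemma kb_add: "kb n (a + b) \<longleftrightarrow> kb n a \<and> kb n b"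
  by (auto simp: kb_iff lookup_add)

lemma trunc_single_mult:
  "trunc n (sng a x * q) = (if kb n a then sng a x * trunc n q else 0)"
proof (rule poly_mapping_eqI)
  fix T
  show "lkp (trunc n (sng a x * q)) T = lkp (if kb n a then sng a x * trunc n q else 0) T"
  proof (cases "\<forall>i. lkp a i \<le> lkp T i")
    case True
    have "kb n T \<longleftrightarrow> kb n a \<and> kb n (T - a)"
      using mono_split[OF True] kb_add by metis
    then show ?thesis using True
      by (auto simp: lookup_trunc lookup_single_mult)
  next
    case False
    then show ?thesis by (auto simp: lookup_trunc lookup_single_mult)
  qed
qed

lemma trunc_one: "trunc n 1 = 1"
  by (rule poly_mapping_eqI) (auto simp: lookup_trunc lookup_one when_def kb_def)

lemma trunc_single: "trunc n (sng a x) = (if kb n a then sng a x else 0)"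
  using trunc_single_mult[of n a x 1] by (simp add: trunc_one)

lemma trunc_mult: "trunc n (p * q) = trunc n p * trunc n q"
proof -
  have "trunc n (p * q) = (\<Sum>mo\<in>Poly_Mapping.keys p. trunc n (sng mo (lkp p mo) * q))"
    by (subst poly_repr[of p]) (simp add: sum_distrib_right trunc_sum)
  also have "\<dots> = (\<Sum>mo\<in>Poly_Mapping.keys p. trunc n (sng mo (lkp p mo)) * trunc n q)"
    by (rule sum.cong) (auto simp: trunc_single_mult trunc_single)
  also have "\<dots> = trunc n p * trunc n q"
    by (subst (2) poly_repr[of p]) (simp add: sum_distrib_right trunc_sum)
  finally show ?thesis .
qed

lemma in_P_mult: "in_P n p \<Longrightarrow> in_P n q \<Longrightarrow> in_P n (p * q)"
  by (simp add: in_P_trunc trunc_mult)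
lemma in_P_add: "in_P n p \<Longrightarrow> in_P n q \<Longrightarrow> in_P n (p + q)"
  by (simp add: in_P_trunc trunc_add)
lemma in_P_diff: "in_P n p \<Longrightarrow> in_P n q \<Longrightarrow> in_P n (p - q)"
  by (simp add: in_P_trunc trunc_diff)
lemma in_P_uminus: "in_P n p \<Longrightarrow> in_P n (- p)"
  by (simp add: in_P_trunc trunc_uminus)
lemma in_P_zero: "in_P n 0"
  by (simp add: in_P_trunc trunc_zero)
lemma in_P_sum: "(\<And>x. x \<in> A \<Longrightarrow> in_P n (g x)) \<Longrightarrow> in_P n (sum g A)"
  by (simp add: in_P_trunc trunc_sum)
lemma in_P_Const: "in_P n (Const x)"
  by (simp add: in_P_trunc Const_def trunc_single kb_def)
lemma in_P_Var: "i < n \<Longrightarrow> in_P n (Var i)"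
  by (simp add: in_P_trunc Var_def trunc_single kb_def)
lemma in_P_mono: "n \<le> n' \<Longrightarrow> in_P n p \<Longrightarrow> in_P n' p"
  unfolding in_P_def by (meson lessThan_iff order_less_le_trans subsetD subsetI)

lemma wpot_single: "wpot c f = (\<Sum>i<c. sng (sng i 1) (f i))"
  by (simp add: wpot_def Var_def Const_single)

lemma wpot_nzd:
  fixes f :: "nat \<Rightarrow> 'a::comm_ring_1"
  assumes "c > 0" "\<And>r. r * f 0 = 0 \<Longrightarrow> r = 0" "wpot c f * y = 0"
  shows "y = 0"
proof (rule ccontr)
  assume "y \<noteq> 0"
  then have ne: "Poly_Mapping.keys y \<noteq> {}" by simp
  define D where "D = Max ((\<lambda>mo. lkp mo 0) ` Poly_Mapping.keys y)"
  have "D \<in> (\<lambda>mo. lkp mo 0) ` Poly_Mapping.keys y"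
    unfolding D_def using ne by (intro Max_in) auto
  then obtain mt where mt: "mt \<in> Poly_Mapping.keys y" "lkp mt 0 = D" by auto
  have Dmax: "mo \<in> Poly_Mapping.keys y \<Longrightarrow> lkp mo 0 \<le> D" for mo
    unfolding D_def by simp
  define T where "T = mt + sng 0 1"
  have "lkp (wpot c f * y) T = (\<Sum>i<c. lkp (sng (sng i 1) (f i) * y) T)"
    by (simp add: wpot_single sum_distrib_right lookup_sum)
  also have "\<dots> = (\<Sum>i<c. if i = 0 then f 0 * lkp y mt else 0)"
  proof (rule sum.cong)
    fix i assume "i \<in> {..<c}"
    show "lkp (sng (sng i 1) (f i) * y) T = (if i = 0 then f 0 * lkp y mt else 0)"
    proof (cases "i = 0")
      case True
      have "T - sng 0 1 = mt" unfolding T_def by simp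
      then show ?thesis using True by (simp add: lookup_single_mult T_def lookup_add)
    next
      case False
      show ?thesis
      proof (cases "\<forall>j. lkp (sng i 1) j \<le> lkp T j")
        case True
        have "lkp (T - sng i 1) 0 = D + 1"
          using False mt(2) by (simp add: T_def lookup_minus lookup_add lookup_single)
        then have "T - sng i 1 \<notin> Poly_Mapping.keys y" using Dmax by fastforce
        then show ?thesis using False True by (simp add: lookup_single_mult in_keys_iff)
      next
        case False2: False
        then show ?thesis using False by (auto simp: lookup_single_mult)
      qed
    qed
  qed simp
  also have "\<dots> = f 0 * lkp y mt" using assms(1) by (simp add: sum.delta)
  finally have "lkp y mt * f 0 = 0" using assms(3) by (simp add: mult.commute)
  then have "lkp y mt = 0" using assms(2) by blast
  then show False using mt(1) by (simp add: in_keys_iff)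
qed

lemma ideal_prod_cong:
  assumes "is_ideal J" "\<And>i. i \<in> A \<Longrightarrow> x i - y i \<in> J"
  shows "prod x A - prod y A \<in> J"
  using assms(2)
proof (induction A rule: infinite_finite_induct)
  case (infinite A) then show ?case using ideal_zero[OF assms(1)] by simp
next
  case empty then show ?case using ideal_zero[OF assms(1)] by simp
next
  case (insert i A)
  have "prod x (insert i A) - prod y (insert i A) = x i * (prod x A - prod y A) + (x i - y i) * prod y A"
    using insert by (simp add: algebra_simps)
  moreover have "x i * (prod x A - prod y A) \<in> J"
    by (rule ideal_multl[OF assms(1)]) (use insert in auto)
  moreover have "(x i - y i) * prod y A \<in> J"
    by (rule ideal_multr[OF assms(1)]) (use insert.prems in auto)
  ultimately show ?case using ideal_add[OF assms(1)] by metis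
qed

lemma ideal_power_cong:
  assumes "is_ideal J" "x - y \<in> J"
  shows "x ^ k - y ^ k \<in> J"
  using ideal_prod_cong[OF assms(1), of "{..<k}" "\<lambda>_. x" "\<lambda>_. y"] assms(2) by simp

lemma cong_point:
  fixes p :: "'a::comm_ring_1 mpoly"
  assumes "in_P c p"
  shows "p - Const (eval_mpoly p a) \<in> gen_ideal {Var i - Const (a i) | i. i < c}"
proof -
  let ?J = "gen_ideal {Var i - Const (a i) | i. i < c}"
  have J: "is_ideal ?J" by (rule gi_ideal)
  have mono: "(\<Prod>i\<in>Poly_Mapping.keys mo. Var i ^ lkp mo i) - Const (mon a mo) \<in> ?J"
    if "kb c mo" for mo
  proof -
    have "Const (mon a mo) = (\<Prod>i\<in>Poly_Mapping.keys mo. Const (a i) ^ lkp mo i)"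
      by (simp add: mon_def Const_prod Const_power)
    moreover have "(\<Prod>i\<in>Poly_Mapping.keys mo. Var i ^ lkp mo i) -
        (\<Prod>i\<in>Poly_Mapping.keys mo. Const (a i) ^ lkp mo i) \<in> ?J"
    proof (rule ideal_prod_cong[OF J])
      fix i assume "i \<in> Poly_Mapping.keys mo"
      then have "i < c" using that by (auto simp: kb_def)
      then have "Var i - Const (a i) \<in> ?J" by (auto intro: gi_gen)
      then show "Var i ^ lkp mo i - Const (a i) ^ lkp mo i \<in> ?J"
        by (rule ideal_power_cong[OF J])
    qed
    ultimately show ?thesis by simp
  qed
  have "p - Const (eval_mpoly p a) =
     (\<Sum>mo\<in>Poly_Mapping.keys p. Const (lkp p mo) *
        ((\<Prod>i\<in>Poly_Mapping.keys mo. Var i ^ lkp mo i) - Const (mon a mo)))"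
  proof -
    have "p = (\<Sum>mo\<in>Poly_Mapping.keys p. Const (lkp p mo) * (\<Prod>i\<in>Poly_Mapping.keys mo. Var i ^ lkp mo i))"
      by (subst poly_repr[of p]) (simp add: single_as_vars)
    moreover have "Const (eval_mpoly p a) = (\<Sum>mo\<in>Poly_Mapping.keys p. Const (lkp p mo) * Const (mon a mo))"
      by (simp add: eval_def2 Const_sum Const_mult)
    ultimately show ?thesis by (simp add: right_diff_distrib sum_subtractf)
  qed
  also have "\<dots> \<in> ?J"
    using assms mono by (auto simp: in_P_kb intro!: ideal_sum[OF J] ideal_multl[OF J])
  finally show ?thesis .
qed

definition cz :: "nat \<Rightarrow> nat \<Rightarrow> 'a::comm_ring_1 mpoly \<Rightarrow> 'a mpoly" where
  "cz n j p = Abs_poly_mapping (\<lambda>mo. if lkp mo n = 0 then lkp p (mo + sng n j) else 0)"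

lemma lookup_cz: "lkp (cz n j p) mo = (if lkp mo n = 0 then lkp p (mo + sng n j) else 0)"
proof -
  have "{mo. (if lkp mo n = 0 then lkp p (mo + sng n j) else 0) \<noteq> 0}
      \<subseteq> (\<lambda>T. T - sng n j) ` Poly_Mapping.keys p"
  proof
    fix mo assume "mo \<in> {mo. (if lkp mo n = 0 then lkp p (mo + sng n j) else 0) \<noteq> 0}"
    then have "mo + sng n j \<in> Poly_Mapping.keys p" by (auto simp: in_keys_iff split: if_splits)
    then show "mo \<in> (\<lambda>T. T - sng n j) ` Poly_Mapping.keys p"
      by (intro image_eqI[of _ _ "mo + sng n j"]) simp_all
  qed
  then have "finite {mo. (if lkp mo n = 0 then lkp p (mo + sng n j) else 0) \<noteq> 0}"
    by (rule finite_subset) simp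
  then show ?thesis unfolding cz_def by simp
qed

lemma cz_add: "cz n j (p + q) = cz n j p + cz n j q"
  by (rule poly_mapping_eqI) (simp add: lookup_cz lookup_add)
lemma cz_diff: "cz n j (p - q) = cz n j p - cz n j q"
  by (rule poly_mapping_eqI) (simp add: lookup_cz lookup_minus)
lemma cz_zero: "cz n j 0 = 0"
  by (rule poly_mapping_eqI) (simp add: lookup_cz)
lemma cz_sum: "cz n j (sum g A) = (\<Sum>x\<in>A. cz n j (g x))"
  by (induction A rule: infinite_finite_induct) (auto simp: cz_zero cz_add)

lemma cz_single_mult:
  assumes "lkp a n = 0"
  shows "cz n j (sng a x * X) = sng a x * cz n j X"
proof (rule poly_mapping_eqI)
  fix mo
  show "lkp (cz n j (sng a x * X)) mo = lkp (sng a x * cz n j X) mo"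
  proof (cases "lkp mo n = 0")
    case True
    have le: "(\<forall>i. lkp a i \<le> lkp (mo + sng n j) i) \<longleftrightarrow> (\<forall>i. lkp a i \<le> lkp mo i)"
    proof
      assume h: "\<forall>i. lkp a i \<le> lkp (mo + sng n j) i"
      show "\<forall>i. lkp a i \<le> lkp mo i"
      proof
        fix i show "lkp a i \<le> lkp mo i"
        proof (cases "i = n")
          case True then show ?thesis using assms by simp
        next
          case False then show ?thesis using h[rule_format, of i] by (simp add: lookup_add lookup_single)
        qed
      qed
    next
      assume h: "\<forall>i. lkp a i \<le> lkp mo i"
      show "\<forall>i. lkp a i \<le> lkp (mo + sng n j) i"
        using h by (simp add: lookup_add trans_le_add1)
    qed
    have eq: "(mo + sng n j) - a = (mo - a) + sng n j" if "\<forall>i. lkp a i \<le> lkp mo i"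
      by (rule poly_mapping_eqI) (use that in \<open>simp add: lookup_add lookup_minus\<close>)
    have z: "lkp (mo - a) n = 0" using True assms by (simp add: lookup_minus)
    show ?thesis using True le eq z by (auto simp: lookup_cz lookup_single_mult)
  next
    case False
    have "lkp (mo - a) n \<noteq> 0" using False assms by (simp add: lookup_minus)
    then show ?thesis using False by (auto simp: lookup_cz lookup_single_mult)
  qed
qed

lemma cz_mult_left:
  assumes "\<forall>mo\<in>Poly_Mapping.keys r. lkp mo n = 0"
  shows "cz n j (r * X) = r * cz n j X"
proof -
  have "cz n j (r * X) = (\<Sum>mo\<in>Poly_Mapping.keys r. cz n j (sng mo (lkp r mo) * X))"
    by (subst poly_repr[of r]) (simp add: sum_distrib_right cz_sum)
  also have "\<dots> = (\<Sum>mo\<in>Poly_Mapping.keys r. sng mo (lkp r mo) * cz n j X)"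
    by (rule sum.cong) (use assms in \<open>auto simp: cz_single_mult\<close>)
  also have "\<dots> = r * cz n j X"
    by (subst (2) poly_repr[of r]) (simp add: sum_distrib_right)
  finally show ?thesis .
qed

lemma cz_Zpow:
  assumes "e \<le> j"
  shows "cz n j (Var n ^ e * X) = cz n (j - e) X"
proof (rule poly_mapping_eqI)
  fix mo
  have le: "\<forall>i. lkp (sng n e) i \<le> lkp (mo + sng n j) i"
    using assms by (simp add: lookup_add lookup_single when_def)
  have eq: "(mo + sng n j) - sng n e = mo + sng n (j - e)"
    by (rule poly_mapping_eqI) (use assms in \<open>simp add: lookup_add lookup_minus lookup_single when_def\<close>)
  show "lkp (cz n j (Var n ^ e * X)) mo = lkp (cz n (j - e) X) mo"
    using le eq by (simp add: lookup_cz Var_power lookup_single_mult)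
qed

definition degz :: "nat \<Rightarrow> 'a::comm_ring_1 mpoly \<Rightarrow> nat" where
  "degz n p = Max ((\<lambda>mo. lkp mo n) ` Poly_Mapping.keys p)"

lemma cz_high:
  assumes "degz n p < j"
  shows "cz n j p = 0"
proof (rule poly_mapping_eqI)
  fix mo
  show "lkp (cz n j p) mo = lkp 0 mo"
  proof (rule ccontr)
    assume "lkp (cz n j p) mo \<noteq> lkp 0 mo"
    then have h: "lkp mo n = 0" "mo + sng n j \<in> Poly_Mapping.keys p"
      by (auto simp: lookup_cz in_keys_iff split: if_splits)
    then have "lkp (mo + sng n j) n \<le> degz n p" unfolding degz_def by simp
    then show False using h(1) assms by (simp add: lookup_add)
  qed
qed

lemma degz_lt:
  assumes "p \<noteq> 0" "\<forall>j\<ge>d. cz n j p = 0"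
  shows "degz n p < d"
proof (rule ccontr)
  assume "\<not> degz n p < d"
  then have c0: "cz n (degz n p) p = 0" using assms(2) by simp
  have "degz n p \<in> (\<lambda>mo. lkp mo n) ` Poly_Mapping.keys p"
    unfolding degz_def using assms(1) by (intro Max_in) auto
  then obtain mo where mo: "mo \<in> Poly_Mapping.keys p" "lkp mo n = degz n p" by auto
  define mo' where "mo' = mo - sng n (degz n p)"
  have "mo' + sng n (degz n p) = mo"
    by (rule poly_mapping_eqI) (use mo(2) in \<open>auto simp: mo'_def lookup_add lookup_minus lookup_single when_def\<close>)
  moreover have "lkp mo' n = 0" using mo(2) by (simp add: mo'_def lookup_minus)
  ultimately have "lkp (cz n (degz n p) p) mo' = lkp p mo" by (simp add: lookup_cz)
  then show False using c0 mo(1) by (simp add: in_keys_iff)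
qed

lemma in_P_cz: "in_P (Suc n) p \<Longrightarrow> in_P n (cz n j p)"
  unfolding in_P_kb
proof
  fix mo assume p: "\<forall>mo\<in>Poly_Mapping.keys p. kb (Suc n) mo" and mo: "mo \<in> Poly_Mapping.keys (cz n j p)"
  then have h: "lkp mo n = 0" "mo + sng n j \<in> Poly_Mapping.keys p"
    by (auto simp: lookup_cz in_keys_iff split: if_splits)
  then have "kb (Suc n) (mo + sng n j)" using p by blast
  then have k: "\<And>i. Suc n \<le> i \<Longrightarrow> lkp (mo + sng n j) i = 0" unfolding kb_iff by blast
  show "kb n mo" unfolding kb_iff
  proof (intro allI impI)
    fix i assume "n \<le> i"
    show "lkp mo i = 0"
    proof (cases "i = n")
      case True then show ?thesis using h(1) by simp
    next
      case False
      then have "Suc n \<le> i" using \<open>n \<le> i\<close> by simp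
      then show ?thesis using k[of i] by (simp add: lookup_add)
    qed
  qed
qed

lemma in_P_nz: "in_P n r \<Longrightarrow> \<forall>mo\<in>Poly_Mapping.keys r. lkp mo n = 0"
  unfolding in_P_kb kb_iff by blast

lemma in_P_power: "in_P n p \<Longrightarrow> in_P n (p ^ k)"
  by (induction k) (auto intro: in_P_mult simp: in_P_Const[of n 1, unfolded Const_one])

section \<open>Hilbert basis theorem (finite generation by a finite subset)\<close>

definition hb_prop :: "nat \<Rightarrow> 'a::comm_ring_1 itself \<Rightarrow> bool" where
  "hb_prop n _ \<longleftrightarrow> (\<forall>S::'a mpoly set. (\<forall>F\<in>S. in_P n F) \<longrightarrow>
      (\<exists>S0. finite S0 \<and> S0 \<subseteq> S \<and> S \<subseteq> gen_ideal S0))"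

lemma reduce_to_subset:
  fixes S :: "'b::comm_ring_1 set"
  assumes "finite A" "A \<subseteq> gen_ideal S" "S \<subseteq> gen_ideal A"
  shows "\<exists>S0. finite S0 \<and> S0 \<subseteq> S \<and> S \<subseteq> gen_ideal S0"
proof -
  have "\<forall>x\<in>A. \<exists>F. finite F \<and> F \<subseteq> S \<and> x \<in> gen_ideal F"
    using assms(2) gi_finite by blast
  then obtain Fx where Fx: "\<And>x. x \<in> A \<Longrightarrow> finite (Fx x) \<and> Fx x \<subseteq> S \<and> x \<in> gen_ideal (Fx x)"
    by metis
  define S0 where "S0 = (\<Union>x\<in>A. Fx x)"
  have "finite S0" using assms(1) Fx by (auto simp: S0_def)
  moreover have "S0 \<subseteq> S" using Fx by (auto simp: S0_def)
  moreover have "A \<subseteq> gen_ideal S0"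
  proof
    fix x assume "x \<in> A"
    then have "x \<in> gen_ideal (Fx x)" "Fx x \<subseteq> S0" using Fx by (auto simp: S0_def)
    then show "x \<in> gen_ideal S0" using gi_subset by blast
  qed
  then have "S \<subseteq> gen_ideal S0" using assms(3) gi_mono by blast
  ultimately show ?thesis by blast
qed

lemma in_P_0_Const:
  assumes "in_P 0 F"
  shows "F = Const (lkp F 0)"
proof (rule poly_mapping_eqI)
  fix mo
  have "mo \<in> Poly_Mapping.keys F \<Longrightarrow> mo = 0"
    using assms unfolding in_P_def by auto
  then show "lkp F mo = lkp (Const (lkp F 0)) mo"
    by (cases "mo = 0") (auto simp: Const_def lookup_single when_def in_keys_iff)
qed

lemma hb_base:
  assumes "noetherian_ring TYPE('a::comm_ring_1)"
  shows "hb_prop 0 TYPE('a)"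
  unfolding hb_prop_def
proof (intro allI impI)
  fix S :: "'a mpoly set"
  assume S: "\<forall>F\<in>S. in_P 0 F"
  define T where "T = (\<lambda>F. lkp F 0) ` S"
  obtain Fin where Fin: "finite Fin" "gen_ideal T = gen_ideal Fin"
    using assms gi_ideal[of T] unfolding noetherian_ring_def by blast
  have f1: "Fin \<subseteq> gen_ideal T" using Fin(2) gi_gen by blast
  have f2: "T \<subseteq> gen_ideal Fin" using Fin(2) gi_gen by blast
  obtain T0 where T0: "finite T0" "T0 \<subseteq> T" "T \<subseteq> gen_ideal T0"
    using reduce_to_subset[OF Fin(1) f1 f2] by (elim exE conjE)
  obtain S1 where S1: "S1 \<subseteq> S" "finite S1" "T0 = (\<lambda>F. lkp F 0) ` S1"
    using T0(1,2) finite_subset_image[of T0 "\<lambda>F. lkp F 0" S] unfolding T_def by blast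
  have "S \<subseteq> gen_ideal S1"
  proof
    fix F assume F: "F \<in> S"
    then have "lkp F 0 \<in> gen_ideal ((\<lambda>F. lkp F 0) ` S1)" using T0(3) S1(3) T_def by blast
    then obtain r where r: "lkp F 0 = (\<Sum>G\<in>S1. r G * lkp G 0)"
      using gi_image_sum[OF S1(2), of "\<lambda>F. lkp F 0"] by blast
    have "F = Const (lkp F 0)" using S F in_P_0_Const by blast
    also have "\<dots> = (\<Sum>G\<in>S1. Const (r G) * Const (lkp G 0))"
      by (simp add: r Const_sum Const_mult)
    also have "\<dots> = (\<Sum>G\<in>S1. Const (r G) * G)"
    proof (rule sum.cong)
      fix G assume "G \<in> S1"
      then have "G = Const (lkp G 0)" using S S1(1) in_P_0_Const by blast
      then show "Const (r G) * Const (lkp G 0) = Const (r G) * G" by simp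
    qed simp
    also have "\<dots> \<in> gen_ideal S1"
      by (intro ideal_sum[OF gi_ideal] ideal_multl[OF gi_ideal] gi_gen)
    finally show "F \<in> gen_ideal S1" .
  qed
  then show "\<exists>S0. finite S0 \<and> S0 \<subseteq> S \<and> S \<subseteq> gen_ideal S0" using S1 by blast
qed

primrec seqL :: "('b list \<Rightarrow> 'b) \<Rightarrow> nat \<Rightarrow> 'b list" where
  "seqL g 0 = []"
| "seqL g (Suc k) = seqL g k @ [g (seqL g k)]"

lemma set_seqL: "set (seqL g k) = (\<lambda>i. g (seqL g i)) ` {..<k}"
  by (induction k) (auto simp: lessThan_Suc)

lemma hb_step:
  fixes tyA :: "'a::comm_ring_1 itself"
  assumes IH: "hb_prop n TYPE('a)"
  shows "hb_prop (Suc n) TYPE('a)"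
  unfolding hb_prop_def
proof (intro allI impI)
  fix S :: "'a mpoly set"
  assume S: "\<forall>F\<in>S. in_P (Suc n) F"
  define I where "I = gen_ideal S \<inter> {F. in_P (Suc n) F}"
  have SI: "S \<subseteq> I" using S gi_gen unfolding I_def by blast
  have "\<exists>A. finite A \<and> A \<subseteq> I \<and> I \<subseteq> gen_ideal A"
  proof (rule ccontr)
    assume H: "\<not> (\<exists>A. finite A \<and> A \<subseteq> I \<and> I \<subseteq> gen_ideal A)"
    define nxt where "nxt A = (SOME G. G \<in> I - gen_ideal A \<and> (\<forall>G'\<in>I - gen_ideal A. degz n G \<le> degz n G'))" for A
    have nxt: "nxt A \<in> I - gen_ideal A \<and> (\<forall>G'\<in>I - gen_ideal A. degz n (nxt A) \<le> degz n G')"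
      if "finite A" "A \<subseteq> I" for A
    proof -
      have "\<not> I \<subseteq> gen_ideal A" using H that by meson
      then obtain G0 where "G0 \<in> I - gen_ideal A" by auto
      then have "\<exists>G. G \<in> I - gen_ideal A \<and> (\<forall>G'. G' \<in> I - gen_ideal A \<longrightarrow> degz n G \<le> degz n G')"
        by (rule ex_has_least_nat)
      then have "\<exists>G. G \<in> I - gen_ideal A \<and> (\<forall>G'\<in>I - gen_ideal A. degz n G \<le> degz n G')"
        by blast
      then show ?thesis unfolding nxt_def by (rule someI_ex)
    qed
    define g where "g = (\<lambda>L. nxt (set L))"
    define Fk where "Fk k = nxt (set (seqL g k))" for k
    have gF: "g (seqL g i) = Fk i" for i unfolding Fk_def g_def by simp
    have setF: "set (seqL g k) = Fk ` {..<k}" for k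
      using set_seqL[of g k] gF by simp
    have FkI: "\<forall>i<k. Fk i \<in> I" for k
    proof (induction k)
      case 0 then show ?case by simp
    next
      case (Suc k)
      have fin: "finite (set (seqL g k))" by simp
      have sub: "set (seqL g k) \<subseteq> I" using Suc.IH setF[of k] by auto
      have "Fk k \<in> I" unfolding Fk_def using nxt[OF fin sub] by blast
      then show ?case using Suc less_Suc_eq by auto
    qed
    have Fprop: "Fk k \<in> I - gen_ideal (Fk ` {..<k}) \<and>
        (\<forall>G'\<in>I - gen_ideal (Fk ` {..<k}). degz n (Fk k) \<le> degz n G')" for k
    proof -
      have fin: "finite (set (seqL g k))" by simp
      have sub: "set (seqL g k) \<subseteq> I" using FkI setF by auto
      have A: "Fk k = nxt (set (seqL g k))" by (simp add: Fk_def)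
      have "Fk k \<in> I - gen_ideal (set (seqL g k)) \<and>
        (\<forall>G'\<in>I - gen_ideal (set (seqL g k)). degz n (Fk k) \<le> degz n G')"
        using nxt[OF fin sub] A by simp
      then show ?thesis unfolding setF .
    qed
    define LC where "LC k = cz n (degz n (Fk k)) (Fk k)" for k
    have LCP: "in_P n (LC k)" for k
      unfolding LC_def using Fprop[of k] I_def by (auto intro: in_P_cz)
    obtain L0 where L0: "finite L0" "L0 \<subseteq> range LC" "range LC \<subseteq> gen_ideal L0"
      using IH LCP unfolding hb_prop_def by (metis rangeE)
    obtain K0 where K0: "K0 \<subseteq> UNIV" "finite K0" "L0 = LC ` K0"
      using finite_subset_image[OF L0(1,2)] by blast
    obtain N where N: "K0 \<subseteq> {..<N}"
      using K0(2) finite_nat_set_iff_bounded by (auto simp: subset_iff)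
    have "LC N \<in> gen_ideal (LC ` K0)" using L0(3) K0(3) by blast
    also have "\<dots> \<subseteq> gen_ideal (LC ` {..<N})" using N by (intro gi_subset) auto
    also have "\<dots> \<subseteq> {\<Sum>k<N. r k * LC k | r. True}" by (rule gi_image_sum) simp
    finally obtain r where r: "LC N = (\<Sum>k<N. r k * LC k)" by blast
    define r' where "r' k = trunc n (r k)" for k
    have r'P: "in_P n (r' k)" for k unfolding r'_def by (rule trunc_in_P)
    have r': "LC N = (\<Sum>k<N. r' k * LC k)"
    proof -
      have "LC N = trunc n (LC N)" using LCP in_P_trunc by metis
      also have "\<dots> = (\<Sum>k<N. r' k * trunc n (LC k))"
        by (simp add: r trunc_sum trunc_mult r'_def)
      also have "\<dots> = (\<Sum>k<N. r' k * LC k)"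
        using LCP in_P_trunc by metis
      finally show ?thesis .
    qed
    define d where "d = degz n (Fk N)"
    have dk: "degz n (Fk k) \<le> d" if "k < N" for k
    proof -
      have "gen_ideal (Fk ` {..<k}) \<subseteq> gen_ideal (Fk ` {..<N})"
        using that by (intro gi_subset) auto
      then have "Fk N \<in> I - gen_ideal (Fk ` {..<k})" using Fprop[of N] by blast
      then show ?thesis using Fprop[of k] unfolding d_def by blast
    qed
    define Sub where "Sub = (\<Sum>k<N. r' k * (Var n ^ (d - degz n (Fk k)) * Fk k))"
    define G where "G = Fk N - Sub"
    have SubI: "Sub \<in> gen_ideal (Fk ` {..<N})"
      unfolding Sub_def
      by (intro ideal_sum[OF gi_ideal] ideal_multl[OF gi_ideal] gi_gen) auto
    have Gnot: "G \<notin> gen_ideal (Fk ` {..<N})"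
    proof
      assume "G \<in> gen_ideal (Fk ` {..<N})"
      then have "G + Sub \<in> gen_ideal (Fk ` {..<N})" using SubI ideal_add[OF gi_ideal] by blast
      then show False using Fprop[of N] unfolding G_def by simp
    qed
    have FkS: "Fk k \<in> gen_ideal S" "in_P (Suc n) (Fk k)" for k
      using Fprop[of k] unfolding I_def by auto
    have GI: "G \<in> I"
    proof -
      have "Sub \<in> gen_ideal S" unfolding Sub_def
        using FkS by (intro ideal_sum[OF gi_ideal] ideal_multl[OF gi_ideal]) auto
      then have "G \<in> gen_ideal S" unfolding G_def using FkS ideal_diff[OF gi_ideal] by blast
      moreover have "in_P (Suc n) G" unfolding G_def Sub_def
        using FkS r'P
        by (intro in_P_diff in_P_sum in_P_mult in_P_power in_P_Var) (auto intro: in_P_mono[of n "Suc n"])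
      ultimately show ?thesis unfolding I_def by blast
    qed
    have Gne: "G \<noteq> 0" using Gnot ideal_zero[OF gi_ideal] by metis
    have czG: "cz n j G = 0" if "d \<le> j" for j
    proof -
      have cz_term: "cz n j (r' k * (Var n ^ (d - degz n (Fk k)) * Fk k)) =
          r' k * cz n (j - (d - degz n (Fk k))) (Fk k)" for k
      proof -
        have ej: "d - degz n (Fk k) \<le> j" using that by simp
        show ?thesis using cz_mult_left[OF in_P_nz[OF r'P]] cz_Zpow[OF ej, of n "Fk k"]
          by (simp only:)
      qed
      have "cz n j G = cz n j (Fk N) - (\<Sum>k<N. r' k * cz n (j - (d - degz n (Fk k))) (Fk k))"
        unfolding G_def Sub_def by (simp add: cz_diff cz_sum cz_term)
      also have "\<dots> = 0"
      proof (cases "j = d")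
        case True
        have "(\<Sum>k<N. r' k * cz n (j - (d - degz n (Fk k))) (Fk k)) = (\<Sum>k<N. r' k * LC k)"
          by (rule sum.cong) (use True dk in \<open>auto simp: LC_def\<close>)
        then show ?thesis using True r' by (simp add: LC_def d_def)
      next
        case False
        then have jd: "d < j" using that by simp
        have "cz n j (Fk N) = 0" using jd by (intro cz_high) (simp add: d_def)
        moreover have "(\<Sum>k<N. r' k * cz n (j - (d - degz n (Fk k))) (Fk k)) = 0"
        proof (rule sum.neutral, intro ballI)
          fix k assume "k \<in> {..<N}"
          then have "degz n (Fk k) < j - (d - degz n (Fk k))" using jd dk[of k] by simp
          then show "r' k * cz n (j - (d - degz n (Fk k))) (Fk k) = 0" by (simp add: cz_high)
        qed
        ultimately show ?thesis by simp
      qed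
      finally show ?thesis .
    qed
    have "degz n G < d" using degz_lt[OF Gne] czG by blast
    moreover have "d \<le> degz n G" using Fprop[of N] GI Gnot unfolding d_def by blast
    ultimately show False by simp
  qed
  then obtain A where A: "finite A" "A \<subseteq> I" "I \<subseteq> gen_ideal A" by blast
  have "A \<subseteq> gen_ideal S" using A(2) unfolding I_def by blast
  moreover have "S \<subseteq> gen_ideal A" using SI A(3) by blast
  ultimately show "\<exists>S0. finite S0 \<and> S0 \<subseteq> S \<and> S \<subseteq> gen_ideal S0"
    using reduce_to_subset[OF A(1)] by blast
qed

lemma hilbert_basis:
  assumes "noetherian_ring TYPE('a::comm_ring_1)"
  shows "hb_prop n TYPE('a)"
  by (induction n) (auto intro: hb_base[OF assms] hb_step)

definition mm :: "nat \<Rightarrow> (nat \<Rightarrow> nat \<Rightarrow> 'b::comm_ring_1) \<Rightarrow> (nat \<Rightarrow> nat \<Rightarrow> 'b) \<Rightarrow> nat \<Rightarrow> nat \<Rightarrow> 'b" where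
  "mm N X Y i j = (\<Sum>k<N. X i k * Y k j)"

definition idm :: "nat \<Rightarrow> 'b::comm_ring_1 \<Rightarrow> nat \<Rightarrow> nat \<Rightarrow> 'b" where
  "idm N c i j = (if i < N \<and> j < N \<and> i = j then c else 0)"

definition bnd :: "nat \<Rightarrow> (nat \<Rightarrow> nat \<Rightarrow> 'b::zero) \<Rightarrow> bool" where
  "bnd N X \<longleftrightarrow> (\<forall>i j. N \<le> i \<or> N \<le> j \<longrightarrow> X i j = 0)"

definition blk :: "nat \<Rightarrow> (nat \<Rightarrow> nat \<Rightarrow> 'b::zero) \<Rightarrow> (nat \<Rightarrow> nat \<Rightarrow> 'b) \<Rightarrow> (nat \<Rightarrow> nat \<Rightarrow> 'b)
   \<Rightarrow> (nat \<Rightarrow> nat \<Rightarrow> 'b) \<Rightarrow> nat \<Rightarrow> nat \<Rightarrow> 'b" where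
  "blk N A B C D i j =
    (if i < N then (if j < N then A i j else if j < 2 * N then B i (j - N) else 0)
     else if i < 2 * N then (if j < N then C (i - N) j else if j < 2 * N then D (i - N) (j - N) else 0)
     else 0)"

lemma sum_split2:
  fixes f :: "nat \<Rightarrow> 'b::comm_monoid_add"
  shows "sum f {..<2 * N} = sum f {..<N} + (\<Sum>k<N. f (N + k))"
proof -
  have "sum f {..<2 * N} = sum f ({..<N} \<union> {N..<N + N})"
    by (rule arg_cong[where f="sum f"]) auto
  also have "\<dots> = sum f {..<N} + sum f {N..<N + N}"
    by (rule sum.union_disjoint) auto
  finally have "sum f {..<2 * N} = sum f {..<N} + sum f {N..<N + N}" .
  moreover have "sum f {N..<N + N} = (\<Sum>k<N. f (N + k))"
    using sum.shift_bounds_nat_ivl[of f 0 N N] by (simp add: atLeast0LessThan add.commute)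
  ultimately show ?thesis by simp
qed

lemma blk_mm:
  "mm (2 * N) (blk N A B C D) (blk N A' B' C' D') i j =
   blk N (\<lambda>i j. mm N A A' i j + mm N B C' i j) (\<lambda>i j. mm N A B' i j + mm N B D' i j)
         (\<lambda>i j. mm N C A' i j + mm N D C' i j) (\<lambda>i j. mm N C B' i j + mm N D D' i j) i j"
proof -
  have L: "blk N A B C D i k = (if i < N then A i k else if i < 2 * N then C (i - N) k else 0)"
    if "k < N" for k using that by (simp add: blk_def)
  have L2: "blk N A B C D i (N + k) = (if i < N then B i k else if i < 2 * N then D (i - N) k else 0)"
    if "k < N" for k using that by (simp add: blk_def)
  have R: "blk N A' B' C' D' k j = (if j < N then A' k j else if j < 2 * N then B' k (j - N) else 0)"
    if "k < N" for k using that by (simp add: blk_def)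
  have R2: "blk N A' B' C' D' (N + k) j = (if j < N then C' k j else if j < 2 * N then D' k (j - N) else 0)"
    if "k < N" for k using that by (simp add: blk_def)
  have "mm (2 * N) (blk N A B C D) (blk N A' B' C' D') i j =
      (\<Sum>k<N. blk N A B C D i k * blk N A' B' C' D' k j) +
      (\<Sum>k<N. blk N A B C D i (N + k) * blk N A' B' C' D' (N + k) j)"
    unfolding mm_def by (rule sum_split2)
  also have "\<dots> = (\<Sum>k<N. (if i < N then A i k else if i < 2 * N then C (i - N) k else 0) *
                          (if j < N then A' k j else if j < 2 * N then B' k (j - N) else 0)) +
      (\<Sum>k<N. (if i < N then B i k else if i < 2 * N then D (i - N) k else 0) *
              (if j < N then C' k j else if j < 2 * N then D' k (j - N) else 0))"
    by (intro arg_cong2[where f="(+)"] sum.cong) (simp_all add: L L2 R R2)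
  also have "\<dots> = blk N (\<lambda>i j. mm N A A' i j + mm N B C' i j) (\<lambda>i j. mm N A B' i j + mm N B D' i j)
         (\<lambda>i j. mm N C A' i j + mm N D C' i j) (\<lambda>i j. mm N C B' i j + mm N D D' i j) i j"
    by (simp add: blk_def mm_def)
  finally show ?thesis .
qed

lemma mm_idm_r: "mm N X (idm N c) i j = (if j < N then X i j * c else 0)"
proof -
  have "mm N X (idm N c) i j = (\<Sum>k<N. if k = j then (if j < N then X i j * c else 0) else 0)"
    unfolding mm_def idm_def by (rule sum.cong) auto
  then show ?thesis by (simp add: sum.delta)
qed

lemma mm_idm_l: "mm N (idm N c) X i j = (if i < N then c * X i j else 0)"
proof -
  have "mm N (idm N c) X i j = (\<Sum>k<N. if k = i then (if i < N then c * X i j else 0) else 0)"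
    unfolding mm_def idm_def by (rule sum.cong) auto
  then show ?thesis by (simp add: sum.delta)
qed

lemma mm_zero_r: "mm N X (\<lambda>_ _. 0) i j = 0" by (simp add: mm_def)
lemma mm_zero_l: "mm N (\<lambda>_ _. 0) X i j = 0" by (simp add: mm_def)
lemma mm_neg_r: "mm N X (\<lambda>i j. - Y i j) i j = - mm N X Y i j" by (simp add: mm_def sum_negf)
lemma mm_neg_l: "mm N (\<lambda>i j. - Y i j) X i j = - mm N Y X i j" by (simp add: mm_def sum_negf)

section \<open>Koszul matrix factorizations\<close>

fun kmat :: "('b::comm_ring_1 \<times> 'b \<times> int) list \<Rightarrow> nat \<Rightarrow> nat \<Rightarrow> 'b" where
  "kmat [] = (\<lambda>i j. 0)"
| "kmat ((p, q, e) # L) = blk (2 ^ length L) (kmat L) (idm (2 ^ length L) q) (idm (2 ^ length L) p)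
      (\<lambda>i j. - kmat L i j)"

fun kdeg :: "('b \<times> 'b \<times> int) list \<Rightarrow> int \<Rightarrow> nat \<Rightarrow> int" where
  "kdeg [] n j = n div 2"
| "kdeg ((p, q, e) # L) n j = (if j < 2 ^ length L then kdeg L n j else kdeg L (n + 1) (j - 2 ^ length L) - e)"

lemma kmat_bnd: "bnd (2 ^ length L) (kmat L)"
proof (induction L)
  case Nil then show ?case by (simp add: bnd_def)
next
  case (Cons t L) then show ?case
    by (cases t) (auto simp: bnd_def blk_def)
qed

lemma kmat_pred:
  assumes "P 0" "\<And>x. P x \<Longrightarrow> P (- x)" "\<forall>(p, q, e)\<in>set L. P p \<and> P q"
  shows "P (kmat L i j)"
  using assms(3)
proof (induction L arbitrary: i j)
  case Nil then show ?case using assms(1) by simp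
next
  case (Cons t L)
  obtain p q e where t: "t = (p, q, e)" by (cases t)
  then show ?case using Cons assms(1,2) by (auto simp: blk_def idm_def)
qed

lemma kmat_sq:
  "mm (2 ^ length L) (kmat L) (kmat L) i j =
   idm (2 ^ length L) (\<Sum>(p, q, e)\<leftarrow>L. p * q) i j"
proof (induction L arbitrary: i j)
  case Nil then show ?case by (simp add: mm_def idm_def)
next
  case (Cons t L)
  obtain p q e where t: "t = (p, q, e)" by (cases t)
  let ?N = "2 ^ length L"
  let ?s = "(\<Sum>(p, q, e)\<leftarrow>L. p * q)"
  have bK: "kmat L a b = 0" if "?N \<le> a \<or> ?N \<le> b" for a b
    using kmat_bnd[of L] that unfolding bnd_def by blast
  have e2: "(2::nat) ^ length (t # L) = 2 * ?N" by simp
  show ?case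
    unfolding e2 unfolding t kmat.simps
    apply (subst blk_mm)
    using Cons.IH bK
    by (auto simp: blk_def mm_idm_r mm_idm_l mm_neg_r mm_neg_l idm_def algebra_simps)
qed

lemma kdeg_shift: "kdeg L (n + 2) j = kdeg L n j + 1"
proof (induction L arbitrary: n j)
  case Nil then show ?case by simp
next
  case (Cons t L)
  obtain p q e where t: "t = (p, q, e)" by (cases t)
  show ?case using Cons.IH[of "n + 1"] Cons.IH[of n] unfolding t by (simp add: algebra_simps)
qed

lemma homog_zero: "homogeneous 0 e" by (simp add: homogeneous_def)
lemma homog_uminus: "homogeneous p e \<Longrightarrow> homogeneous (- p) e" by (simp add: homogeneous_def keys_minus)

lemma kmat_homog:
  assumes "\<forall>(p, q, e)\<in>set L. homogeneous p e \<and> homogeneous q (1 - e)"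
    "i < 2 ^ length L" "j < 2 ^ length L"
  shows "homogeneous (kmat L i j) (kdeg L n j - kdeg L (n - 1) i)"
  using assms
proof (induction L arbitrary: n i j)
  case Nil then show ?case by (simp add: homog_zero)
next
  case (Cons t L)
  obtain p q e where t: "t = (p, q, e)" by (cases t)
  let ?N = "2 ^ length L"
  have hp: "homogeneous p e" and hq: "homogeneous q (1 - e)"
    and hL: "\<forall>(p, q, e)\<in>set L. homogeneous p e \<and> homogeneous q (1 - e)"
    using Cons.prems(1) t by auto
  have i2: "i < 2 * ?N" and j2: "j < 2 * ?N" using Cons.prems(2,3) by auto
  show ?case
  proof (cases "i < ?N")
    case iN: True
    show ?thesis
    proof (cases "j < ?N")
      case True
      then show ?thesis using iN Cons.IH[OF hL iN True, of n] t by (simp add: blk_def)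
    next
      case False
      have sh: "kdeg L (n + 1) i = kdeg L (n - 1) i + 1"
        using kdeg_shift[of L "n - 1" i] by (simp add: algebra_simps)
      show ?thesis using iN False j2 t sh hq
        by (auto simp: blk_def idm_def homog_zero)
    qed
  next
    case iN: False
    show ?thesis
    proof (cases "j < ?N")
      case True
      show ?thesis using iN True i2 t hp
        by (auto simp: blk_def idm_def homog_zero)
    next
      case False
      have "homogeneous (kmat L (i - ?N) (j - ?N))
          (kdeg L (n + 1) (j - ?N) - kdeg L (n + 1 - 1) (i - ?N))"
        by (rule Cons.IH[OF hL]) (use i2 j2 iN False in auto)
      then show ?thesis using iN False i2 j2 t
        by (auto simp: blk_def homog_uminus)
    qed
  qed
qed

lemma kmat_htpy:
  fixes L :: "('b::comm_ring_1 \<times> 'b \<times> int) list"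
  assumes J: "is_ideal J" and P0: "P 0" and Pn: "\<And>x. P x \<Longrightarrow> P (- x)"
    and ex: "\<exists>(p, q, e)\<in>set L. \<exists>u. u * p - 1 \<in> J \<and> P u"
  shows "\<exists>H. (\<forall>i j. P (H i j)) \<and>
    (\<forall>i<2 ^ length L. \<forall>j<2 ^ length L.
        mm (2 ^ length L) (kmat L) H i j + mm (2 ^ length L) H (kmat L) i j - idm (2 ^ length L) 1 i j \<in> J)"
  using ex
proof (induction L)
  case Nil then show ?case by simp
next
  case (Cons t L)
  obtain p q e where t: "t = (p, q, e)" by (cases t)
  let ?N = "2 ^ length L"
  have e2: "(2::nat) ^ length (t # L) = 2 * ?N" by simp
  have bK: "kmat L a b = 0" if "?N \<le> a \<or> ?N \<le> b" for a b
    using kmat_bnd[of L] that unfolding bnd_def by blast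
  show ?case
  proof (cases "\<exists>u. u * p - 1 \<in> J \<and> P u")
    case True
    then obtain u where u: "u * p - 1 \<in> J" "P u" by blast
    define H where "H = blk ?N (\<lambda>_ _. 0) (idm ?N u) (\<lambda>_ _. 0) (\<lambda>_ _. 0)"
    have "P (H i j)" for i j using P0 u(2) by (simp add: H_def blk_def idm_def)
    moreover have "mm (2 * ?N) (kmat (t # L)) H i j + mm (2 * ?N) H (kmat (t # L)) i j
        - idm (2 * ?N) 1 i j \<in> J" if "i < 2 * ?N" "j < 2 * ?N" for i j
    proof -
      have "mm (2 * ?N) (kmat (t # L)) H i j + mm (2 * ?N) H (kmat (t # L)) i j
        - idm (2 * ?N) 1 i j = (if i = j then u * p - 1 else 0)"
        unfolding t kmat.simps H_def
        apply (subst blk_mm)+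
        using that bK
        by (auto simp: blk_def mm_idm_r mm_idm_l mm_zero_r mm_zero_l mm_neg_r mm_neg_l idm_def algebra_simps)
      then show ?thesis using u(1) ideal_zero[OF J] by simp
    qed
    ultimately show ?thesis unfolding e2 by blast
  next
    case False
    then have "\<exists>(p, q, e)\<in>set L. \<exists>u. u * p - 1 \<in> J \<and> P u" using Cons.prems t by auto
    then obtain H where H: "\<forall>i j. P (H i j)"
      "\<forall>i<?N. \<forall>j<?N. mm ?N (kmat L) H i j + mm ?N H (kmat L) i j - idm ?N 1 i j \<in> J"
      using Cons.IH by blast
    define H' where "H' = blk ?N H (\<lambda>_ _. 0) (\<lambda>_ _. 0) (\<lambda>i j. - H i j)"
    have "P (H' i j)" for i j using P0 Pn H(1) by (simp add: H'_def blk_def)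
    moreover have "mm (2 * ?N) (kmat (t # L)) H' i j + mm (2 * ?N) H' (kmat (t # L)) i j
        - idm (2 * ?N) 1 i j \<in> J" if "i < 2 * ?N" "j < 2 * ?N" for i j
    proof -
      have "mm (2 * ?N) (kmat (t # L)) H' i j + mm (2 * ?N) H' (kmat (t # L)) i j
        - idm (2 * ?N) 1 i j =
        (if i < ?N \<and> j < ?N then mm ?N (kmat L) H i j + mm ?N H (kmat L) i j - idm ?N 1 i j
         else if ?N \<le> i \<and> ?N \<le> j then mm ?N (kmat L) H (i - ?N) (j - ?N) + mm ?N H (kmat L) (i - ?N) (j - ?N) - idm ?N 1 (i - ?N) (j - ?N)
         else 0)"
        unfolding t kmat.simps H'_def
        apply (subst blk_mm)+
        using that bK
        by (auto simp: blk_def mm_idm_r mm_idm_l mm_zero_r mm_zero_l mm_neg_r mm_neg_l idm_def algebra_simps)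
      then show ?thesis using H(2) that ideal_zero[OF J] by auto
    qed
    ultimately show ?thesis unfolding e2 by blast
  qed
qed

lemma sum_swap_mult:
  fixes a :: "nat \<Rightarrow> 'b::comm_ring_1"
  shows "(\<Sum>j<N. a j * (\<Sum>k<N. b j k * c k)) = (\<Sum>k<N. (\<Sum>j<N. a j * b j k) * c k)"
proof -
  have "(\<Sum>j<N. a j * (\<Sum>k<N. b j k * c k)) = (\<Sum>j<N. \<Sum>k<N. a j * b j k * c k)"
    by (simp add: sum_distrib_left mult.assoc)
  also have "\<dots> = (\<Sum>k<N. \<Sum>j<N. a j * b j k * c k)" by (rule sum.swap)
  also have "\<dots> = (\<Sum>k<N. (\<Sum>j<N. a j * b j k) * c k)" by (simp add: sum_distrib_right)
  finally show ?thesis .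
qed

lemma mf_exact:
  fixes X :: "nat \<Rightarrow> nat \<Rightarrow> 'a::comm_ring_1 mpoly"
  assumes sq: "\<And>i j. mm N X X i j = idm N w i j"
    and XP: "\<And>i j. in_P c (X i j)"
    and nzd: "\<And>y. w * y = 0 \<Longrightarrow> y = 0"
    and vP: "\<forall>j. in_P c (v j)"
    and cyc: "\<forall>i<N. (\<Sum>j<N. X i j * v j) - 0 \<in> gen_ideal {w}"
  shows "\<exists>u. (\<forall>k. in_P c (u k)) \<and> (\<forall>j<N. v j - (\<Sum>k<N. X j k * u k) \<in> gen_ideal {w})"
proof -
  have "\<forall>i. \<exists>r. i < N \<longrightarrow> (\<Sum>j<N. X i j * v j) = r * w"
    using cyc by (auto simp: gi_single)
  then obtain r where r: "\<And>i. i < N \<Longrightarrow> (\<Sum>j<N. X i j * v j) = r i * w" by metis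
  define y where "y j = v j - (\<Sum>k<N. X j k * r k)" for j
  have Xy: "(\<Sum>j<N. X i j * y j) = 0" if "i < N" for i
  proof -
    have "(\<Sum>j<N. X i j * y j) = (\<Sum>j<N. X i j * v j) - (\<Sum>j<N. X i j * (\<Sum>k<N. X j k * r k))"
      by (simp add: y_def right_diff_distrib sum_subtractf)
    also have "(\<Sum>j<N. X i j * (\<Sum>k<N. X j k * r k)) = (\<Sum>k<N. mm N X X i k * r k)"
      by (simp add: sum_swap_mult mm_def)
    also have "\<dots> = (\<Sum>k<N. (if k = i then w * r i else 0))"
      by (rule sum.cong) (use that in \<open>auto simp: sq idm_def\<close>)
    also have "\<dots> = w * r i" using that by (simp add: sum.delta)
    finally show ?thesis using r[OF that] by (simp add: mult.commute)
  qed
  have y0: "y i = 0" if "i < N" for i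
  proof (rule nzd)
    have "w * y i = (\<Sum>k<N. (if k = i then w * y i else 0))" using that by (simp add: sum.delta)
    also have "\<dots> = (\<Sum>k<N. mm N X X i k * y k)"
      by (rule sum.cong) (use that in \<open>auto simp: sq idm_def\<close>)
    also have "\<dots> = (\<Sum>j<N. X i j * (\<Sum>k<N. X j k * y k))"
      by (simp add: sum_swap_mult mm_def)
    also have "\<dots> = 0" by (rule sum.neutral) (simp add: Xy)
    finally show "w * y i = 0" .
  qed
  define u where "u k = trunc c (r k)" for k
  have u0: "v j - (\<Sum>k<N. X j k * u k) = 0" if "j < N" for j
  proof -
    have "v j = (\<Sum>k<N. X j k * r k)" using y0[OF that] by (simp add: y_def)
    then have "trunc c (v j) = (\<Sum>k<N. trunc c (X j k) * u k)"
      by (simp add: trunc_sum trunc_mult u_def)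
    moreover have tv: "trunc c (v j) = v j" using vP in_P_trunc by blast
    moreover have tX: "\<And>k. trunc c (X j k) = X j k" using XP in_P_trunc by blast
    ultimately show ?thesis by simp
  qed
  have uP: "\<forall>k. in_P c (u k)" by (simp add: u_def trunc_in_P)
  have z: "(0::'a mpoly) \<in> gen_ideal {w}" by (rule ideal_zero[OF gi_ideal])
  show ?thesis
  proof (intro exI[of _ u] conjI uP allI impI)
    fix j assume "j < N"
    then show "v j - (\<Sum>k<N. X j k * u k) \<in> gen_ideal {w}" using u0 z by simp
  qed
qed

lemma local_unit:
  assumes "local_ring_with m" "x \<notin> m"
  shows "\<exists>v. v * x = 1"
proof -
  have "gen_ideal {x} = UNIV"
  proof (rule ccontr)
    assume "gen_ideal {x} \<noteq> UNIV"
    then have "gen_ideal {x} \<subseteq> m" using assms(1) gi_ideal unfolding local_ring_with_def by blast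
    then show False using assms(2) gi_gen by blast
  qed
  then have "1 \<in> gen_ideal {x}" by simp
  then have "1 \<in> {r * x | r. True}" unfolding gi_single .
  then show ?thesis by auto
qed

lemma ideal_sq_list:
  assumes m: "is_ideal m" and x: "x \<in> ideal_sq m"
  shows "\<exists>L. (\<forall>(a, b)\<in>set L. a \<in> m \<and> b \<in> m) \<and> x = (\<Sum>(a, b)\<leftarrow>L. a * b)"
proof -
  define T where "T = {x. \<exists>L. (\<forall>(a, b)\<in>set L. a \<in> m \<and> b \<in> m) \<and> x = (\<Sum>(a, b)\<leftarrow>L. a * b)}"
  have "is_ideal T" unfolding is_ideal_def
  proof (intro conjI ballI allI)
    show "0 \<in> T" unfolding T_def by (auto intro!: exI[of _ "[]"])
  next
    fix x y assume "x \<in> T" "y \<in> T"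
    then obtain L1 L2 where "\<forall>(a, b)\<in>set L1. a \<in> m \<and> b \<in> m" "x = (\<Sum>(a, b)\<leftarrow>L1. a * b)"
      "\<forall>(a, b)\<in>set L2. a \<in> m \<and> b \<in> m" "y = (\<Sum>(a, b)\<leftarrow>L2. a * b)"
      unfolding T_def by blast
    then show "x + y \<in> T" unfolding T_def by (intro CollectI exI[of _ "L1 @ L2"]) auto
  next
    fix x r assume "x \<in> T"
    then obtain L1 where L1: "\<forall>(a, b)\<in>set L1. a \<in> m \<and> b \<in> m" "x = (\<Sum>(a, b)\<leftarrow>L1. a * b)"
      unfolding T_def by blast
    have "r * x = (\<Sum>(a, b)\<leftarrow>map (\<lambda>(a, b). (r * a, b)) L1. a * b)"
      unfolding L1(2) by (induction L1) (auto simp: algebra_simps)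
    moreover have "\<forall>(a, b)\<in>set (map (\<lambda>(a, b). (r * a, b)) L1). a \<in> m \<and> b \<in> m"
      using L1(1) ideal_multl[OF m] by auto
    ultimately show "r * x \<in> T" unfolding T_def by blast
  qed
  moreover have "{a * b | a b. a \<in> m \<and> b \<in> m} \<subseteq> T"
  proof
    fix z assume "z \<in> {a * b | a b. a \<in> m \<and> b \<in> m}"
    then obtain a b where "a \<in> m" "b \<in> m" "z = a * b" by blast
    then show "z \<in> T" unfolding T_def by (intro CollectI exI[of _ "[(a, b)]"]) simp
  qed
  ultimately show ?thesis using gi_least x unfolding ideal_sq_def T_def by blast
qed

lemma sum_list_CV:
  "(\<Sum>(p, q, e)\<leftarrow>map (\<lambda>(a, b). (Const a * Var i, Const b, 1::int)) L. p * q) =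
   Const (\<Sum>(a, b)\<leftarrow>L. a * b) * (Var i :: 'a::comm_ring_1 mpoly)"
  by (induction L) (auto simp: Const_zero Const_add Const_mult algebra_simps)

lemma homog_CV: "homogeneous (Const a * Var i) 1"
proof -
  have "Const a * Var i = sng (sng i 1) a" by (simp add: Var_def Const_single)
  then show ?thesis
    by (simp add: homogeneous_def mono_deg_def)
qed

lemma homog_C: "homogeneous (Const b) 0"
  by (simp add: homogeneous_def Const_def mono_deg_def)

lemma sum_concat_upt:
  "(\<Sum>x\<leftarrow>concat (map g [0..<n]). h x) = (\<Sum>i<n. (\<Sum>x\<leftarrow>g i. h x))"
  by (induction n) auto

lemma ideal_sq_sub: "is_ideal m \<Longrightarrow> ideal_sq m \<subseteq> m"
  unfolding ideal_sq_def by (rule gi_least) (auto intro: ideal_multl)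

theorem mainTheorem11:
  fixes m :: "'a::comm_ring_1 set" and c :: nat and f :: "nat \<Rightarrow> 'a"
    and S :: "'a mpoly set"
  assumes "regular_local_ring m"
    and "c \<ge> 2"
    and "\<forall>i<c. f i \<in> ideal_sq m"
    and "regular_sequence c f"
    and "homog_poly_set c S"
  shows "\<exists>C. grKtac c f C \<and>
           (\<forall>a. proj_point_lift c m a \<longrightarrow>
              (\<not> contractible_at c f C a \<longleftrightarrow> zero_locus m S a))"
proof -
  have noeth: "noetherian_ring TYPE('a)" and loc: "local_ring_with m"
    using assms(1) unfolding regular_local_ring_def by auto
  have mI: "is_ideal m" and mU: "m \<noteq> UNIV" using loc unfolding local_ring_with_def by auto
  have one_notin: "(1::'a) \<notin> m"
  proof
    assume one: "(1::'a) \<in> m"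
    have "x \<in> m" for x using ideal_multl[OF mI one, of x] by simp
    then have "m = UNIV" by blast
    then show False using mU by blast
  qed
  have fm: "f i \<in> m" if "i < c" for i using assms(3) ideal_sq_sub[OF mI] that by blast
  have SP: "\<forall>F\<in>S. in_P c F" using assms(5) unfolding homog_poly_set_def by blast
  have hb: "hb_prop c TYPE('a)" by (rule hilbert_basis[OF noeth])
  have "(\<forall>F\<in>S. in_P c F) \<longrightarrow> (\<exists>S0. finite S0 \<and> S0 \<subseteq> S \<and> S \<subseteq> gen_ideal S0)"
    using hb unfolding hb_prop_def by (rule spec)
  then have "\<exists>S0. finite S0 \<and> S0 \<subseteq> S \<and> S \<subseteq> gen_ideal S0" using SP by (rule mp)
  then obtain S0 where S0: "finite S0" "S0 \<subseteq> S" "S \<subseteq> gen_ideal S0" by (elim exE conjE)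
  obtain Fs where Fs: "set Fs = S0" using finite_list[OF S0(1)] by blast
  define eF where "eF (F::'a mpoly) = (SOME e. homogeneous F e)" for F
  have eF: "homogeneous F (eF F)" if "F \<in> S" for F
  proof -
    have "\<exists>e. homogeneous F e" using assms(5) that unfolding homog_poly_set_def by blast
    then show ?thesis unfolding eF_def by (rule someI_ex)
  qed
  have "\<forall>i. \<exists>L. i < c \<longrightarrow> (\<forall>(a, b)\<in>set L. a \<in> m \<and> b \<in> m) \<and> f i = (\<Sum>(a, b)\<leftarrow>L. a * b)"
    using assms(3) ideal_sq_list[OF mI] by blast
  then obtain Lf where Lf: "\<And>i. i < c \<Longrightarrow> (\<forall>(a, b)\<in>set (Lf i). a \<in> m \<and> b \<in> m) \<and>
      f i = (\<Sum>(a, b)\<leftarrow>Lf i. a * b)" by metis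
  define WL where "WL = concat (map (\<lambda>i. map (\<lambda>(a, b). (Const a * Var i, Const b, 1::int)) (Lf i)) [0..<c])"
  define FL where "FL = map (\<lambda>F. (F, 0::'a mpoly, eF F)) Fs"
  define L where "L = WL @ FL"
  define N where "N = (2::nat) ^ length L"
  define K where "K = kmat L"
  define C :: "'a gcomplex" where "C = ((\<lambda>n::int. N), (\<lambda>n::int. \<lambda>j. kdeg L n j), (\<lambda>n::int. K))"
  have rkC: "rk C n = N" and dgC: "dg C n = kdeg L n" and dmC: "dmat C n = K" for n
    by (simp_all add: C_def rk_def dg_def dmat_def)
  have Npos: "0 < N" unfolding N_def by simp

  have WLprop: "in_P c p \<and> in_P c q \<and> homogeneous p e \<and> homogeneous q (1 - e) \<and>
      (\<forall>a. eval_mpoly p a \<in> m \<and> eval_mpoly q a \<in> m)" if pqe: "(p, q, e) \<in> set WL" for p q e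
  proof -
    have "(p, q, e) \<in> \<Union> (set ` (\<lambda>i. map (\<lambda>(a, b). (Const a * Var i, Const b, 1::int)) (Lf i)) ` set [0..<c])"
      using pqe unfolding WL_def set_concat set_map .
    then obtain i where i00: "i \<in> set [0..<c]"
      "(p, q, e) \<in> set (map (\<lambda>(a, b). (Const a * Var i, Const b, 1::int)) (Lf i))"
      by blast
    then have i0: "i \<in> set [0..<c]"
      "(p, q, e) \<in> (\<lambda>(a, b). (Const a * Var i, Const b, 1::int)) ` set (Lf i)"
      by (simp_all only: set_map)
    then have i: "i < c" by simp
    from i0(2) obtain x where x: "x \<in> set (Lf i)" "(p, q, e) = (\<lambda>(a, b). (Const a * Var i, Const b, 1::int)) x"
      by blast
    obtain a b where xab: "x = (a, b)" by (cases x)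
    have iab: "i < c" "(a, b) \<in> set (Lf i)" "p = Const a * Var i" "q = Const b" "e = 1"
      using i(1) x xab by auto
    then have ab: "a \<in> m" "b \<in> m" using Lf[of i] by auto
    show ?thesis using iab ab homog_CV homog_C
      by (auto simp: in_P_mult in_P_Const in_P_Var eval_mult eval_Const eval_Var intro: ideal_multr[OF mI])
  qed
  have FLprop: "p \<in> S0 \<and> q = 0 \<and> e = eF p" if "(p, q, e) \<in> set FL" for p q e
    using that Fs unfolding FL_def by auto
  have sumWL: "(\<Sum>(p, q, e)\<leftarrow>WL. p * q) = wpot c f"
  proof -
    have "(\<Sum>(p, q, e)\<leftarrow>WL. p * q) =
        (\<Sum>i<c. (\<Sum>(p, q, e)\<leftarrow>map (\<lambda>(a, b). (Const a * Var i, Const b, 1::int)) (Lf i). p * q))"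
      unfolding WL_def by (rule sum_concat_upt)
    also have "\<dots> = (\<Sum>i<c. Const (f i) * Var i)"
    proof (rule sum.cong)
      fix i assume "i \<in> {..<c}"
      then have ic: "i < c" by simp
      have "(\<Sum>(p, q, e)\<leftarrow>map (\<lambda>(a, b). (Const a * Var i, Const b, 1::int)) (Lf i). p * q) =
          Const (\<Sum>(a, b)\<leftarrow>Lf i. a * b) * Var i" by (rule sum_list_CV)
      also have "\<dots> = Const (f i) * Var i" using Lf[OF ic] by simp
      finally show "(\<Sum>(p, q, e)\<leftarrow>map (\<lambda>(a, b). (Const a * Var i, Const b, 1::int)) (Lf i). p * q) =
          Const (f i) * Var i" .
    qed simp
    finally show ?thesis by (simp add: wpot_def)
  qed
  have sumFL: "(\<Sum>(p, q, e)\<leftarrow>FL. p * q) = 0" unfolding FL_def by (induction Fs) auto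
  have sumL: "(\<Sum>(p, q, e)\<leftarrow>L. p * q) = wpot c f" by (simp add: L_def sumWL sumFL)
  have LP: "\<forall>(p, q, e)\<in>set L. in_P c p \<and> in_P c q"
    using WLprop FLprop SP S0(2) in_P_zero unfolding L_def by fastforce
  have Lhom: "\<forall>(p, q, e)\<in>set L. homogeneous p e \<and> homogeneous q (1 - e)"
    using WLprop FLprop eF S0(2) homog_zero unfolding L_def by fastforce
  have KP: "in_P c (K i j)" for i j
    unfolding K_def by (rule kmat_pred[where P="in_P c"]) (use LP in_P_zero in_P_uminus in auto)
  have Kb: "K i j = 0" if "N \<le> i \<or> N \<le> j" for i j
    using kmat_bnd[of L] that unfolding bnd_def K_def N_def by blast
  have Ksq: "mm N K K i j = idm N (wpot c f) i j" for i j
    using kmat_sq[of L i j] sumL unfolding K_def N_def by simp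
  have KTsq: "mm N (\<lambda>i j. K j i) (\<lambda>i j. K j i) i j = idm N (wpot c f) i j" for i j
  proof -
    have "mm N (\<lambda>i j. K j i) (\<lambda>i j. K j i) i j = mm N K K j i"
      unfolding mm_def by (rule sum.cong) (simp_all add: mult.commute)
    then show ?thesis using Ksq[of j i] by (auto simp: idm_def)
  qed
  have f0: "r = 0" if "r * f 0 = 0" for r
  proof -
    have "r * f 0 \<in> gen_ideal (f ` {..<0})" using that by (simp add: gi_empty)
    moreover have "0 < c" using assms(2) by simp
    ultimately have "r \<in> gen_ideal (f ` {..<0})"
      using assms(4) unfolding regular_sequence_def by blast
    then show ?thesis by (simp add: gi_empty)
  qed
  have nzd: "y = 0" if "wpot c f * y = 0" for y
    using wpot_nzd[of c f y] assms(2) f0 that by simp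

  have graded: "is_graded_complex c f C"
    unfolding is_graded_complex_def rkC dgC dmC
  proof (intro conjI allI impI)
    fix n :: int and i j
    show "in_P c (K i j)" by (rule KP)
  next
    fix n :: int and i j assume "N \<le> i \<or> N \<le> j"
    then show "K i j = 0" by (rule Kb)
  next
    fix n :: int and i j assume "i < N \<and> j < N"
    then show "homogeneous (K i j) (kdeg L n j - kdeg L (n - 1) i)"
      unfolding K_def N_def using kmat_homog[OF Lhom] by blast
  next
    fix n :: int and i k assume ik: "i < N \<and> k < N"
    have "(\<Sum>j<N. K i j * K j k) = idm N (wpot c f) i k" using Ksq[of i k] by (simp add: mm_def)
    then show "cong_mod (gen_ideal {wpot c f}) (\<Sum>j<N. K i j * K j k) 0"
      unfolding cong_mod_def using ik gi_gen[of "wpot c f" "{wpot c f}"] ideal_zero[OF gi_ideal]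
      by (auto simp: idm_def)
  qed
  have acyc: "acyclic_R c f C"
    unfolding acyclic_R_def rkC dmC cong_mod_def
  proof (intro allI impI)
    fix n :: int and v :: "nat \<Rightarrow> 'a mpoly"
    assume h: "(\<forall>j. in_P c (v j)) \<and> (\<forall>i<N. (\<Sum>j<N. K i j * v j) - 0 \<in> gen_ideal {wpot c f})"
    show "\<exists>u. (\<forall>k. in_P c (u k)) \<and> (\<forall>j<N. v j - (\<Sum>k<N. K j k * u k) \<in> gen_ideal {wpot c f})"
      using mf_exact[of N K "wpot c f" c v, OF Ksq KP nzd] h by blast
  qed
  have coacyc: "coacyclic_R c f C"
    unfolding coacyclic_R_def rkC dmC cong_mod_def
  proof (intro allI impI)
    fix n :: int and v :: "nat \<Rightarrow> 'a mpoly"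
    assume h: "(\<forall>j. in_P c (v j)) \<and> (\<forall>k<N. (\<Sum>j<N. K j k * v j) - 0 \<in> gen_ideal {wpot c f})"
    show "\<exists>u. (\<forall>i. in_P c (u i)) \<and> (\<forall>j<N. v j - (\<Sum>i<N. K i j * u i) \<in> gen_ideal {wpot c f})"
      using mf_exact[of N "\<lambda>i j. K j i" "wpot c f" c v, OF KTsq KP nzd] h by blast
  qed

  have rank: "\<not> contractible_at c f C a \<longleftrightarrow> zero_locus m S a" for a
  proof
    let ?J = "J_alpha c f a"
    have evJ: "eval_mpoly x a \<in> m" if "x \<in> ?J" for x
    proof (rule eval_gi[OF mI _ that[unfolded J_alpha_def]], intro ballI)
      fix g assume "g \<in> insert (wpot c f) {Var i - Const (a i) | i. i < c}"
      then show "eval_mpoly g a \<in> m"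
      proof
        assume "g = wpot c f"
        then show ?thesis using fm by (auto simp: eval_wpot intro!: ideal_sum[OF mI] ideal_multr[OF mI])
      next
        assume "g \<in> {Var i - Const (a i) | i. i < c}"
        then show ?thesis using ideal_zero[OF mI] by (auto simp: eval_diff eval_Var eval_Const)
      qed
    qed
    show "zero_locus m S a" if nc: "\<not> contractible_at c f C a"
    proof (rule ccontr)
      assume "\<not> zero_locus m S a"
      then obtain F where F: "F \<in> S" "eval_mpoly F a \<notin> m" unfolding zero_locus_def by blast
      have "\<exists>F0\<in>S0. eval_mpoly F0 a \<notin> m"
      proof (rule ccontr)
        assume "\<not> (\<exists>F0\<in>S0. eval_mpoly F0 a \<notin> m)"
        then have "eval_mpoly F a \<in> m" using eval_gi[OF mI] F(1) S0(3) by blast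
        then show False using F(2) by blast
      qed
      then obtain F0 where F0: "F0 \<in> S0" "eval_mpoly F0 a \<notin> m" by blast
      obtain v where v: "v * eval_mpoly F0 a = 1" using local_unit[OF loc F0(2)] by blast
      have F0P: "in_P c F0" using F0(1) S0(2) SP by blast
      have Jid: "is_ideal ?J" unfolding J_alpha_def by (rule gi_ideal)
      have sub: "gen_ideal {Var i - Const (a i) | i. i < c} \<subseteq> ?J"
        unfolding J_alpha_def by (rule gi_subset) auto
      have "Const v * F0 - 1 = Const v * (F0 - Const (eval_mpoly F0 a))"
        by (simp add: right_diff_distrib Const_mult[symmetric] v Const_one)
      also have "\<dots> \<in> ?J"
        using cong_point[OF F0P, of a] sub by (intro ideal_multl[OF Jid]) blast
      finally have uJ: "Const v * F0 - 1 \<in> ?J" .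
      have inL: "(F0, 0, eF F0) \<in> set L" using F0(1) Fs unfolding L_def FL_def by auto
      obtain H where H: "\<forall>i j. in_P c (H i j)"
        "\<forall>i<N. \<forall>j<N. mm N K H i j + mm N H K i j - idm N 1 i j \<in> ?J"
        using kmat_htpy[of ?J "in_P c" L] gi_ideal[of "insert (wpot c f) {Var i - Const (a i) | i. i < c}"]
          in_P_zero in_P_uminus inL uJ in_P_Const[of c v]
        unfolding J_alpha_def[symmetric] K_def N_def by fastforce
      have "contractible_at c f C a"
        unfolding contractible_at_def rkC dmC cong_mod_def
      proof (intro exI[of _ "\<lambda>n. H"] conjI allI impI)
        fix n :: int and i j show "in_P c (H i j)" using H(1) by blast
      next
        fix n :: int and i j assume ij: "i < N \<and> j < N"
        then have "mm N K H i j + mm N H K i j - idm N 1 i j \<in> ?J" using H(2) by blast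
        then show "(\<Sum>k<N. K i k * H k j) + (\<Sum>k<N. H i k * K k j) - (if i = j then 1 else 0) \<in> ?J"
          using ij by (simp add: mm_def idm_def)
      qed
      then show False using nc by blast
    qed
    show "\<not> contractible_at c f C a" if Z: "zero_locus m S a"
    proof
      assume "contractible_at c f C a"
      then have "\<exists>s. (\<forall>(n::int) i j. in_P c (s n i j)) \<and> (\<forall>(n::int) i j. i < N \<and> j < N \<longrightarrow>
          (\<Sum>k<N. K i k * s n k j) + (\<Sum>k<N. s (n - 1) i k * K k j) - (if i = j then 1 else 0) \<in> ?J)"
        unfolding contractible_at_def rkC dmC cong_mod_def .
      then obtain s where s2: "(\<forall>(n::int) i j. in_P c (s n i j)) \<and> (\<forall>(n::int) i j. i < N \<and> j < N \<longrightarrow>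
          (\<Sum>k<N. K i k * s n k j) + (\<Sum>k<N. s (n - 1) i k * K k j) - (if i = j then 1 else 0) \<in> ?J)"
        by (rule exE)
      then have s: "\<forall>(n::int) i j. i < N \<and> j < N \<longrightarrow>
          (\<Sum>k<N. K i k * s n k j) + (\<Sum>k<N. s (n - 1) i k * K k j) - (if i = j then 1 else 0) \<in> ?J"
        by (rule conjunct2)
      have evK: "eval_mpoly (K i j) a \<in> m" for i j
        unfolding K_def
      proof (rule kmat_pred[where P="\<lambda>x. eval_mpoly x a \<in> m"])
        show "eval_mpoly 0 a \<in> m" by (simp add: eval_zero ideal_zero[OF mI])
        show "eval_mpoly (- x) a \<in> m" if "eval_mpoly x a \<in> m" for x
          using that by (simp add: eval_uminus ideal_uminus[OF mI])
        show "\<forall>(p, q, e)\<in>set L. eval_mpoly p a \<in> m \<and> eval_mpoly q a \<in> m"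
        proof (intro ballI, clarify)
          fix p q e assume "(p, q, e) \<in> set L"
          then have "(p, q, e) \<in> set WL \<or> (p, q, e) \<in> set FL" unfolding L_def by simp
          then show "eval_mpoly p a \<in> m \<and> eval_mpoly q a \<in> m"
          proof
            assume "(p, q, e) \<in> set WL" then show ?thesis using WLprop by blast
          next
            assume "(p, q, e) \<in> set FL"
            then have "p \<in> S" "q = 0" using FLprop S0(2) by auto
            then show ?thesis using Z unfolding zero_locus_def by (simp add: eval_zero ideal_zero[OF mI])
          qed
        qed
      qed
      define X where "X = (\<Sum>k<N. K 0 k * s 0 k 0) + (\<Sum>k<N. s (0 - 1) 0 k * K k 0)"
      have "X - 1 \<in> ?J" using s[rule_format, of 0 0 0] Npos unfolding X_def by simp
      then have "eval_mpoly (X - 1) a \<in> m" by (rule evJ)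
      then have e1: "eval_mpoly X a - 1 \<in> m" by (simp add: eval_diff eval_one)
      have "eval_mpoly X a = (\<Sum>k<N. eval_mpoly (K 0 k) a * eval_mpoly (s 0 k 0) a) +
          (\<Sum>k<N. eval_mpoly (s (0 - 1) 0 k) a * eval_mpoly (K k 0) a)"
        by (simp add: X_def eval_add eval_sum eval_mult)
      moreover have "(\<Sum>k<N. eval_mpoly (K 0 k) a * eval_mpoly (s 0 k 0) a) \<in> m"
        by (rule ideal_sum[OF mI], rule ideal_multr[OF mI], rule evK)
      moreover have "(\<Sum>k<N. eval_mpoly (s (0 - 1) 0 k) a * eval_mpoly (K k 0) a) \<in> m"
        by (rule ideal_sum[OF mI], rule ideal_multl[OF mI], rule evK)
      ultimately have e2: "eval_mpoly X a \<in> m" using ideal_add[OF mI] by simp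
      have "eval_mpoly X a - (eval_mpoly X a - 1) \<in> m" by (rule ideal_diff[OF mI e2 e1])
      then show False using one_notin by simp
    qed
  qed
  show ?thesis
    by (intro exI[of _ C] conjI allI impI) (use graded acyc coacyc rank in \<open>auto simp: grKtac_def\<close>)
qed

end
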